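(* Let $d=1$, let $F=\{\mathbf{p}_0,\ldots,\mathbf{p}_n\}\subset\mathbb{R}$ contain at least two distinct points, and let $k\ge1$. Then for every $(\lambda_0,\ldots,\lambda_n)\in\mathcal{P}_k$, for the IFS $S_i(x)=\lambda_ix+(1-\lambda_i)\mathbf{p}_i$ ($i=0,\ldots,n$), the set $X_k$ contains an open dense subset of $X$ and Lebesgue almost every $x\in X$ belongs to $X_k$.
   Context: Write $\mathcal{D}=\{0,\ldots,n\}$ and $\mathcal{P}_k=\{(\lambda_i)_{i\in\mathcal{D}}:\lambda_i\in(0,1),\ \prod_{i\in\mathcal{D}}\lambda_i^{k(n+1)^{k-1}}\ge\frac{1}{2}\}$. $X\subset\mathbb{R}$ is the unique non-empty compact set with $X=\bigcup_{i\in\mathcal{D}}S_i(X)$; "open dense subset of $X$" refers to the relative topology of $X$. The coding map is $\pi(\mathbf{a})=\lim_{j\to\infty}(S_{a_1}\circ\cdots\circ S_{a_j})(0)$. For $\mathbf{b}\in\mathcal{D}^k$, $\mathrm{freq}_{\mathbf{b}}(\mathbf{a})=\lim_{m\to\infty}\frac1m\#\{1\le j\le m:a_j\cdots a_{j+k-1}=\mathbf{b}\}$; $\mathbf{a}$ is $k$-simply normal if this equals $(n+1)^{-k}$ for all $\mathbf{b}\in\mathcal{D}^k$. $X_k$ is the set of $x\in X$ having a $k$-simply normal $\mathbf{a}$ with $\pi(\mathbf{a})=x$. *)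

theory Defs
  imports "HOL-Analysis.Analysis"
begin

definition ifs_map :: "(nat \<Rightarrow> real) \<Rightarrow> (nat \<Rightarrow> real) \<Rightarrow> nat \<Rightarrow> real \<Rightarrow> real" where
  "ifs_map lam p i x = lam i * x + (1 - lam i) * p i"

definition comp_prefix :: "(nat \<Rightarrow> real \<Rightarrow> real) \<Rightarrow> (nat \<Rightarrow> nat) \<Rightarrow> nat \<Rightarrow> real \<Rightarrow> real" where
  "comp_prefix S a j = foldr (\<lambda>i g. S (a i) \<circ> g) [0..<j] id"

definition occ_count :: "(nat \<Rightarrow> nat) \<Rightarrow> nat list \<Rightarrow> nat \<Rightarrow> nat" where
  "occ_count a b m = card {j. j < m \<and> map a [j..<j + length b] = b}"

definition k_simply_normal :: "nat \<Rightarrow> nat \<Rightarrow> (nat \<Rightarrow> nat) \<Rightarrow> bool" where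
  "k_simply_normal n k a \<longleftrightarrow>
     (\<forall>b. length b = k \<and> set b \<subseteq> {0..n} \<longrightarrow>
        ((\<lambda>m. real (occ_count a b m) / real m) \<longlonglongrightarrow> 1 / real (n + 1) ^ k))"

text \<open>X_k: points with a k-simply normal coding a in D^N with pi(a) = x.\<close>
definition Xk_set :: "nat \<Rightarrow> nat \<Rightarrow> (nat \<Rightarrow> real \<Rightarrow> real) \<Rightarrow> real set \<Rightarrow> real set" where
  "Xk_set n k S X = {x \<in> X. \<exists>a. (\<forall>j. a j \<in> {0..n}) \<and> k_simply_normal n k a \<and>
                          ((\<lambda>j. comp_prefix S a j 0) \<longlonglongrightarrow> x)}"

end

theory Submission
  imports Defs
begin

locale ifs =
  fixes n :: nat and p lam :: "nat \<Rightarrow> real"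
  assumes lam01: "\<And>i. i \<le> n \<Longrightarrow> 0 < lam i \<and> lam i < 1"
begin

definition S where "S = ifs_map lam p"
definition Sw :: "nat list \<Rightarrow> real \<Rightarrow> real" where "Sw w = foldr (\<lambda>i g. S i \<circ> g) w id"
definition rat :: "nat list \<Rightarrow> real" where "rat w = prod_list (map lam w)"

lemma Sw_Nil[simp]: "Sw [] = id" by (simp add: Sw_def)
lemma Sw_Cons[simp]: "Sw (i#w) = S i \<circ> Sw w" by (simp add: Sw_def)
lemma Sw_append: "Sw (u@v) = Sw u \<circ> Sw v" by (induct u) auto
lemma rat_Nil[simp]: "rat [] = 1" by (simp add: rat_def)
lemma rat_Cons[simp]: "rat (i#w) = lam i * rat w" by (simp add: rat_def)
lemma S_eq: "S i x = lam i * x + (1 - lam i) * p i" by (simp add: S_def ifs_map_def)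

lemma Sw_affine: "Sw w x = rat w * x + Sw w 0"
proof (induct w arbitrary: x)
  case (Cons i w)
  have h: "Sw w x = rat w * x + Sw w 0" by (rule Cons)
  have "Sw (i # w) x = lam i * (rat w * x + Sw w 0) + (1 - lam i) * p i"
    by (simp add: S_eq h)
  also have "\<dots> = rat (i # w) * x + (lam i * Sw w 0 + (1 - lam i) * p i)"
    by (simp add: algebra_simps)
  finally show ?case by (simp add: S_eq)
qed simp

lemma Sw_diff: "Sw w x - Sw w y = rat w * (x - y)"
  using Sw_affine[of w x] Sw_affine[of w y] by (simp add: algebra_simps)

lemma rat_pos: "set w \<subseteq> {0..n} \<Longrightarrow> 0 < rat w"
  by (induct w) (auto simp: lam01)

lemma rat_le1: "set w \<subseteq> {0..n} \<Longrightarrow> rat w \<le> 1"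
proof (induct w)
  case (Cons i w)
  then have "0 < lam i" "lam i < 1" "rat w \<le> 1" "0 < rat w" using lam01 rat_pos by auto
  then show ?case by (simp add: mult_le_one)
qed simp

lemma rat_lt1: "set w \<subseteq> {0..n} \<Longrightarrow> w \<noteq> [] \<Longrightarrow> rat w < 1"
proof (cases w)
  case (Cons i w')
  assume a: "set w \<subseteq> {0..n}"
  then have l: "0 < lam i" "lam i < 1" "rat w' \<le> 1" using lam01 rat_le1 Cons by auto
  have "lam i * rat w' \<le> lam i * 1" by (rule mult_left_mono) (use l in auto)
  then have "lam i * rat w' < 1" using l by linarith
  then show ?thesis using Cons by simp
qed simp

definition lmax where "lmax = Max (lam ` {0..n})"

lemma lmax: "0 < lmax" "lmax < 1" "i \<le> n \<Longrightarrow> lam i \<le> lmax"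
proof -
  have ne: "lam ` {0..n} \<noteq> {}" by auto
  have "lam 0 \<le> lmax" unfolding lmax_def by (rule Max_ge) auto
  then show "0 < lmax" using lam01[of 0] by linarith
  show "lmax < 1" unfolding lmax_def using lam01 ne by (subst Max_less_iff) auto
  show "i \<le> n \<Longrightarrow> lam i \<le> lmax" unfolding lmax_def by (rule Max_ge) auto
qed

lemma rat_le_pow: "set w \<subseteq> {0..n} \<Longrightarrow> rat w \<le> lmax ^ length w"
proof (induct w)
  case (Cons i w)
  then have "lam i \<le> lmax" "rat w \<le> lmax ^ length w" "0 < lam i" "0 < rat w" using lmax lam01 rat_pos by auto
  then show ?case by (simp add: mult_mono')
qed simp

lemma comp_prefix_eq: "comp_prefix S c j = Sw (map c [0..<j])"
  unfolding comp_prefix_def Sw_def by (simp add: foldr_map o_def)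

lemma Sw_range:
  assumes "set w \<subseteq> {0..n}" "\<And>i. i \<le> n \<Longrightarrow> A \<le> p i \<and> p i \<le> B" "A \<le> z" "z \<le> B"
  shows "A \<le> Sw w z \<and> Sw w z \<le> B"
  using assms(1)
proof (induct w)
  case (Cons i w)
  then have i: "i \<le> n" and h: "A \<le> Sw w z" "Sw w z \<le> B" by auto
  have l: "0 < lam i" "lam i < 1" using lam01 i by auto
  have "A = lam i * A + (1 - lam i) * A" by (simp add: algebra_simps)
  also have "\<dots> \<le> lam i * Sw w z + (1 - lam i) * p i"
    using l h assms(2)[OF i] by (intro add_mono mult_left_mono) auto
  finally have 1: "A \<le> S i (Sw w z)" by (simp add: S_eq)
  have "lam i * Sw w z + (1 - lam i) * p i \<le> lam i * B + (1 - lam i) * B"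
    using l h assms(2)[OF i] by (intro add_mono mult_left_mono) auto
  also have "\<dots> = B" by (simp add: algebra_simps)
  finally have 2: "S i (Sw w z) \<le> B" by (simp add: S_eq)
  show ?case using 1 2 by simp
qed (use assms in auto)

lemma Sw_lower:
  assumes "set w \<subseteq> {0..n}" "\<And>i. i \<le> n \<Longrightarrow> A \<le> p i" "A \<le> z"
  shows "A \<le> Sw w z"
  using assms(1)
proof (induct w)
  case (Cons i w)
  then have i: "i \<le> n" and h: "A \<le> Sw w z" by auto
  have l: "0 < lam i" "lam i < 1" using lam01 i by auto
  have "A = lam i * A + (1 - lam i) * A" by (simp add: algebra_simps)
  also have "\<dots> \<le> lam i * Sw w z + (1 - lam i) * p i"
    using l h assms(2)[OF i] by (intro add_mono mult_left_mono) auto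
  finally show ?case by (simp add: S_eq)
qed (use assms in auto)

lemma Sw_upper:
  assumes "set w \<subseteq> {0..n}" "\<And>i. i \<le> n \<Longrightarrow> p i \<le> B" "z \<le> B"
  shows "Sw w z \<le> B"
  using assms(1)
proof (induct w)
  case (Cons i w)
  then have i: "i \<le> n" and h: "Sw w z \<le> B" by auto
  have l: "0 < lam i" "lam i < 1" using lam01 i by auto
  have "lam i * Sw w z + (1 - lam i) * p i \<le> lam i * B + (1 - lam i) * B"
    using l h assms(2)[OF i] by (intro add_mono mult_left_mono) auto
  also have "\<dots> = B" by (simp add: algebra_simps)
  finally show ?case by (simp add: S_eq)
qed (use assms in auto)

lemma Sw_strict:
  assumes "set w \<subseteq> {0..n}" "\<And>i. i \<le> n \<Longrightarrow> A \<le> p i" "A \<le> z" "\<exists>i\<in>set w. A < p i"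
  shows "A < Sw w z"
  using assms(1,4)
proof (induct w)
  case (Cons i w)
  then have i: "i \<le> n" by auto
  have l: "0 < lam i" "lam i < 1" using lam01 i by auto
  have ge: "A \<le> Sw w z" using Sw_lower[of w A z] Cons assms by auto
  have "A < p i \<or> A < Sw w z" using Cons by auto
  have m1: "lam i * A \<le> lam i * Sw w z" by (rule mult_left_mono) (use l ge in auto)
  have m2: "(1 - lam i) * A \<le> (1 - lam i) * p i" by (rule mult_left_mono) (use l assms(2)[OF i] in auto)
  have "A < lam i * Sw w z + (1 - lam i) * p i"
  proof (cases "A < p i")
    case True
    have "(1 - lam i) * A < (1 - lam i) * p i" by (rule mult_strict_left_mono) (use l True in auto)
    then show ?thesis using m1 by (simp add: algebra_simps)
  next
    case False
    then have "A < Sw w z" using Cons by auto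
    then have "lam i * A < lam i * Sw w z" by (rule mult_strict_left_mono) (use l in auto)
    then show ?thesis using m2 by (simp add: algebra_simps)
  qed
  then show ?case by (simp add: S_eq)
qed simp

end

definition dg :: "nat \<Rightarrow> nat \<Rightarrow> nat \<Rightarrow> nat" where "dg q t i = t div q ^ i mod q"

lemma digits_mod_eq:
  fixes x y q m :: nat
  assumes "\<And>j. j < m \<Longrightarrow> x div q ^ j mod q = y div q ^ j mod q"
  shows "x mod q ^ m = y mod q ^ m"
  using assms
proof (induct m)
  case (Suc m)
  have "x mod q ^ Suc m = x mod (q ^ m * q)" by (simp only: power_Suc2)
  also have "\<dots> = q ^ m * (x div q ^ m mod q) + x mod q ^ m"
    by (rule mod_mult2_eq)
  also have "\<dots> = q ^ m * (y div q ^ m mod q) + y mod q ^ m" using Suc by auto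
  also have "\<dots> = y mod (q ^ m * q)" by (rule mod_mult2_eq[symmetric])
  also have "\<dots> = y mod q ^ Suc m" by (simp only: power_Suc2)
  finally show ?case .
qed simp

lemma mod_Suc_cancel:
  fixes t s M :: nat
  assumes "(t + 1) mod M = (s + 1) mod M"
  shows "t mod M = s mod M"
proof (cases "M = 0")
  case True then show ?thesis using assms by simp
next
  case False
  have e: "\<And>x::nat. x mod M = ((x + 1) mod M + (M - 1)) mod M"
  proof -
    fix x :: nat
    have "x + 1 + (M - 1) = x + M" using False by simp
    then have "x mod M = (x + 1 + (M - 1)) mod M" by simp
    also have "\<dots> = ((x + 1) mod M + (M - 1)) mod M" by (simp add: mod_add_left_eq)
    finally show "x mod M = ((x + 1) mod M + (M - 1)) mod M" .
  qed
  show ?thesis using e[of t] e[of s] assms by simp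
qed

lemma divmod_aux: "j < (k::nat) \<Longrightarrow> (m * k + j) div k = m" "j < k \<Longrightarrow> (m * k + j) mod k = j"
  by auto

lemma dg_lt: "0 < q \<Longrightarrow> dg q t i < q"
  by (simp add: dg_def)

lemma card_decomp:
  fixes M K :: nat
  assumes K: "0 < K"
  shows "card {r. r < M * K \<and> P r} = (\<Sum>h<K. card {t. t < M \<and> P (t * K + h)})"
proof -
  have fin: "finite (SIGMA h:{..<K}. {t. t < M \<and> P (t * K + h)})" by auto
  have inj: "inj_on (\<lambda>(h, t). t * K + h) (SIGMA h:{..<K}. {t. t < M \<and> P (t * K + h)})"
  proof (rule inj_onI, clarsimp)
    fix h t h' t'
    assume a: "h < K" "h' < K" "t * K + h = t' * K + h'"
    have "(t * K + h) div K = t" "(t' * K + h') div K = t'"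
      "(t * K + h) mod K = h" "(t' * K + h') mod K = h'"
      by (rule divmod_aux(1)[OF a(1)], rule divmod_aux(1)[OF a(2)], rule divmod_aux(2)[OF a(1)], rule divmod_aux(2)[OF a(2)])
    then show "h = h' \<and> t = t'" using a(3) by metis
  qed
  have im: "(\<lambda>(h, t). t * K + h) ` (SIGMA h:{..<K}. {t. t < M \<and> P (t * K + h)}) = {r. r < M * K \<and> P r}"
  proof (rule set_eqI, rule iffI)
    fix r assume "r \<in> (\<lambda>(h, t). t * K + h) ` (SIGMA h:{..<K}. {t. t < M \<and> P (t * K + h)})"
    then obtain h t where ht: "h < K" "t < M" "P (t * K + h)" "r = t * K + h" by auto
    have "t * K + h < (t + 1) * K" using \<open>h < K\<close> by simp
    also have "\<dots> \<le> M * K" using \<open>t < M\<close> by (intro mult_right_mono) auto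
    finally show "r \<in> {r. r < M * K \<and> P r}" using ht by auto
  next
    fix r assume "r \<in> {r. r < M * K \<and> P r}"
    then have r: "r < M * K" "P r" by auto
    have "r div K < M" using r(1) K by (simp add: div_less_iff_less_mult)
    moreover have "r = (r div K) * K + r mod K" by simp
    ultimately show "r \<in> (\<lambda>(h, t). t * K + h) ` (SIGMA h:{..<K}. {t. t < M \<and> P (t * K + h)})"
      using r K by (intro image_eqI[of _ _ "(r mod K, r div K)"]) auto
  qed
  have "card {r. r < M * K \<and> P r} = card (SIGMA h:{..<K}. {t. t < M \<and> P (t * K + h)})"
    using card_image[OF inj] im by simp
  also have "\<dots> = (\<Sum>h<K. card {t. t < M \<and> P (t * K + h)})"
    by (rule card_SigmaI) auto
  finally show ?thesis .
qed

lemma card_bij_filter: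
  assumes "bij_betw g A A"
  shows "card {x \<in> A. Q (g x)} = card {x \<in> A. Q x}"
proof -
  have "bij_betw g {x \<in> A. Q (g x)} {y \<in> A. Q y}"
    using assms unfolding bij_betw_def inj_on_def by auto
  then show ?thesis by (rule bij_betw_same_card)
qed

lemma bij_betw_filter:
  assumes f: "bij_betw f A B"
  shows "bij_betw f {x \<in> A. P (f x)} {y \<in> B. P y}"
proof -
  have im: "f ` {x \<in> A. P (f x)} = {y \<in> B. P y}"
  proof
    show "f ` {x \<in> A. P (f x)} \<subseteq> {y \<in> B. P y}" using bij_betwE[OF f] by auto
    show "{y \<in> B. P y} \<subseteq> f ` {x \<in> A. P (f x)}"
    proof
      fix y assume y: "y \<in> {y \<in> B. P y}"
      then have "y \<in> f ` A" using bij_betw_imp_surj_on[OF f] by blast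
      then obtain x where "x \<in> A" "y = f x" by blast
      then show "y \<in> f ` {x \<in> A. P (f x)}" using y by blast
    qed
  qed
  have "inj_on f {x \<in> A. P (f x)}"
    by (rule inj_on_subset[OF bij_betw_imp_inj_on[OF f]]) auto
  then show ?thesis using im by (simp add: bij_betw_def)
qed

locale comb =
  fixes q k :: nat and \<sigma> :: "nat \<Rightarrow> nat"
  assumes q2: "2 \<le> q" and k1: "1 \<le> k" and sig: "bij_betw \<sigma> {0..<q} {0..<q}"
begin

definition "N = q ^ k"
definition "L = k * N"
definition Wf :: "nat \<Rightarrow> nat" where "Wf r = \<sigma> (dg q (r div k) (r mod k))"
definition cwin :: "(nat \<Rightarrow> nat) \<Rightarrow> nat \<Rightarrow> nat list" where
  "cwin f \<rho> = map (\<lambda>i. f ((\<rho> + i) mod L)) [0..<k]"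
definition "Words = {xs. set xs \<subseteq> {0..<q} \<and> length xs = k}"

lemma N_pos: "0 < N" using q2 by (simp add: N_def)
lemma L_pos: "0 < L" using N_pos k1 by (simp add: L_def)
lemma N_ge2: "2 \<le> N"
proof -
  have "q ^ 1 \<le> q ^ k" using q2 k1 by (intro power_increasing) auto
  then show ?thesis using q2 by (simp add: N_def)
qed
lemma k_lt_L: "k < L"
proof -
  have "k * 1 < k * N" using N_ge2 k1 by (intro mult_strict_left_mono) auto
  then show ?thesis by (simp add: L_def)
qed

lemma sig_lt: "x < q \<Longrightarrow> \<sigma> x < q" using sig by (auto simp: bij_betw_def)
lemma sig_inj: "x < q \<Longrightarrow> y < q \<Longrightarrow> \<sigma> x = \<sigma> y \<Longrightarrow> x = y"
  using sig by (auto simp: bij_betw_def inj_on_def)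

lemma Wf_lt: "Wf r < q" using q2 by (simp add: Wf_def sig_lt dg_lt)

lemma dg_N: "j < k \<Longrightarrow> dg q N j = 0"
proof -
  assume j: "j < k"
  have "q ^ k = q ^ j * q ^ (k - j)" using j by (simp add: power_add[symmetric])
  then have "N div q ^ j = q ^ (k - j)" using q2 by (simp add: N_def)
  moreover have "q ^ (k - j) mod q = 0" using j by (simp add: power_eq_if)
  ultimately show ?thesis by (simp add: dg_def)
qed

lemma Wf_win:
  assumes t: "t < N" and h: "h < k" and i: "i < k"
  shows "Wf ((t * k + h + i) mod L) = \<sigma> (if h + i < k then dg q t (h + i) else dg q (t + 1) (h + i - k))"
proof (cases "h + i < k")
  case True
  have "t * k + (h + i) < (t + 1) * k" using True by simp
  also have "\<dots> \<le> N * k" using t by (intro mult_right_mono) auto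
  finally have lt: "t * k + (h + i) < L" by (simp add: L_def mult.commute)
  have "(t * k + (h + i)) div k = t" "(t * k + (h + i)) mod k = h + i" using True by auto
  then show ?thesis using True lt by (simp add: Wf_def add.assoc)
next
  case False
  define j where "j = h + i - k"
  have j: "j < k" "t * k + h + i = (t + 1) * k + j" using False h i by (auto simp: j_def)
  show ?thesis
  proof (cases "t + 1 < N")
    case True
    have "(t + 1) * k + j < (t + 2) * k" using j by simp
    also have "\<dots> \<le> N * k" using True by (intro mult_right_mono) auto
    finally have lt: "(t + 1) * k + j < L" by (simp add: L_def mult.commute)
    have "((t + 1) * k + j) div k = t + 1" "((t + 1) * k + j) mod k = j" using j divmod_aux by blast+
    then have "Wf ((t + 1) * k + j) = \<sigma> (dg q (t + 1) j)" by (simp only: Wf_def)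
    moreover have "(t * k + h + i) mod L = (t + 1) * k + j" using lt j(2) by simp
    ultimately show ?thesis using False by (simp add: j_def)
  next
    case False2: False
    then have tN: "t + 1 = N" using t by simp
    have jL: "j < L" using j(1) k_lt_L by simp
    have "((t + 1) * k + j) mod L = ((N * k) + j) mod L" using tN by simp
    also have "\<dots> = j" using jL by (simp add: L_def mult.commute)
    finally have "((t + 1) * k + j) mod L = j" .
    then have eqj: "(t * k + h + i) mod L = j" by (simp only: j(2))
    have "Wf j = \<sigma> (dg q 0 j)" using j(1) by (simp add: Wf_def)
    then have "Wf ((t * k + h + i) mod L) = \<sigma> (dg q 0 j)" by (simp only: eqj)
    also have "\<dots> = \<sigma> (dg q (t + 1) j)" using tN dg_N[OF j(1)] by (simp add: dg_def)
    finally show ?thesis using False by (simp add: j_def)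
  qed
qed


lemma length_cwin[simp]: "length (cwin f \<rho>) = k" by (simp add: cwin_def)
lemma nth_cwin: "i < k \<Longrightarrow> cwin f \<rho> ! i = f ((\<rho> + i) mod L)" by (simp add: cwin_def)

lemma card_Words: "card Words = N"
  unfolding Words_def N_def by (simp add: card_lists_length_eq)
lemma finite_Words: "finite Words"
  unfolding Words_def by (simp add: finite_lists_length_eq)

lemma cwin_Words: "(\<And>r. f r < q) \<Longrightarrow> cwin f \<rho> \<in> Words"
  by (auto simp: Words_def cwin_def)

lemma dg_shift: "dg q t (h + j) = dg q (t div q ^ h) j"
  by (simp add: dg_def power_add div_mult2_eq)

lemma phi_inj:
  assumes h: "h < k"
  shows "inj_on (\<lambda>t. cwin Wf (t * k + h)) {0..<N}"
proof (rule inj_onI)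
  fix t s assume t: "t \<in> {0..<N}" and s: "s \<in> {0..<N}"
    and eq: "cwin Wf (t * k + h) = cwin Wf (s * k + h)"
  have e: "Wf ((t * k + h + i) mod L) = Wf ((s * k + h + i) mod L)" if "i < k" for i
    using arg_cong[OF eq, of "\<lambda>xs. xs ! i"] that by (simp add: nth_cwin add.assoc)
  have qpos: "0 < q" using q2 by simp
  have A: "dg q t (h + j) = dg q s (h + j)" if "j < k - h" for j
  proof -
    have "j < k" "h + j < k" using that h by auto
    then have "\<sigma> (dg q t (h + j)) = \<sigma> (dg q s (h + j))"
      using e[of j] Wf_win[of t h j] Wf_win[of s h j] t s h by simp
    then show ?thesis by (rule sig_inj[OF dg_lt[OF qpos] dg_lt[OF qpos]])
  qed
  have B: "dg q (t + 1) j = dg q (s + 1) j" if "j < h" for j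
  proof -
    have i: "k - h + j < k" "\<not> h + (k - h + j) < k" "h + (k - h + j) - k = j" using that h by auto
    then have "\<sigma> (dg q (t + 1) j) = \<sigma> (dg q (s + 1) j)"
      using e[of "k - h + j"] Wf_win[of t h "k - h + j"] Wf_win[of s h "k - h + j"] t s h by simp
    then show ?thesis by (rule sig_inj[OF dg_lt[OF qpos] dg_lt[OF qpos]])
  qed
  have "(t div q ^ h) mod q ^ (k - h) = (s div q ^ h) mod q ^ (k - h)"
  proof (rule digits_mod_eq)
    fix j assume "j < k - h"
    from A[OF this] show "t div q ^ h div q ^ j mod q = s div q ^ h div q ^ j mod q"
      by (simp add: dg_def power_add div_mult2_eq)
  qed
  moreover have "t div q ^ h < q ^ (k - h)" "s div q ^ h < q ^ (k - h)"
  proof -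
    have "q ^ k = q ^ h * q ^ (k - h)" using h by (simp add: power_add[symmetric])
    then show "t div q ^ h < q ^ (k - h)" "s div q ^ h < q ^ (k - h)" using t s qpos
      by (auto simp: N_def div_less_iff_less_mult mult.commute)
  qed
  ultimately have hi: "t div q ^ h = s div q ^ h" by simp
  have "(t + 1) mod q ^ h = (s + 1) mod q ^ h"
  proof (rule digits_mod_eq)
    fix j assume "j < h"
    from B[OF this] show "(t + 1) div q ^ j mod q = (s + 1) div q ^ j mod q"
      by (simp add: dg_def)
  qed
  then have lo: "t mod q ^ h = s mod q ^ h" by (rule mod_Suc_cancel)
  have "t = q ^ h * (t div q ^ h) + t mod q ^ h" by simp
  also have "\<dots> = q ^ h * (s div q ^ h) + s mod q ^ h" using hi lo by simp
  also have "\<dots> = s" by simp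
  finally show "t = s" .
qed

lemma phi_bij:
  assumes h: "h < k"
  shows "bij_betw (\<lambda>t. cwin Wf (t * k + h)) {0..<N} Words"
proof -
  have sub: "(\<lambda>t. cwin Wf (t * k + h)) ` {0..<N} \<subseteq> Words"
    using cwin_Words Wf_lt by blast
  have "card ((\<lambda>t. cwin Wf (t * k + h)) ` {0..<N}) = N"
    using card_image[OF phi_inj[OF h]] by simp
  then have "(\<lambda>t. cwin Wf (t * k + h)) ` {0..<N} = Words"
    using card_subset_eq[OF finite_Words sub] card_Words by simp
  then show ?thesis using phi_inj[OF h] by (simp add: bij_betw_def)
qed

lemma count_win:
  assumes b: "b \<in> Words"
  shows "card {\<rho>. \<rho> < L \<and> cwin Wf \<rho> = b} = k"
proof -
  have one: "card {t. t < N \<and> cwin Wf (t * k + h) = b} = 1" if h: "h < k" for h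
  proof -
    have "b \<in> (\<lambda>t. cwin Wf (t * k + h)) ` {0..<N}"
      using phi_bij[OF h] b by (simp add: bij_betw_def)
    then obtain t0 where t0: "t0 \<in> {0..<N}" "cwin Wf (t0 * k + h) = b"
      by blast
    have u: "t = t0" if "t < N" "cwin Wf (t * k + h) = b" for t
      using inj_onD[OF phi_inj[OF h], of t t0] that t0 by simp
    have "{t. t < N \<and> cwin Wf (t * k + h) = b} = {t0}"
    proof (rule set_eqI)
      fix t show "t \<in> {t. t < N \<and> cwin Wf (t * k + h) = b} \<longleftrightarrow> t \<in> {t0}"
        using t0 u[of t] by auto
    qed
    then show ?thesis by simp
  qed
  have "card {\<rho>. \<rho> < L \<and> cwin Wf \<rho> = b} = (\<Sum>h<k. card {t. t < N \<and> cwin Wf (t * k + h) = b})"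
    using card_decomp[of k N "\<lambda>\<rho>. cwin Wf \<rho> = b"] k1 by (simp add: L_def mult.commute)
  also have "\<dots> = (\<Sum>h<k. 1)" using one by simp
  finally show ?thesis by simp
qed

lemma Wf_tk: "t < N \<Longrightarrow> h < k \<Longrightarrow> cwin Wf (t * k + h) ! 0 = Wf (t * k + h)"
proof -
  assume t: "t < N" and h: "h < k"
  have "t * k + h < (t + 1) * k" using h by simp
  also have "\<dots> \<le> N * k" using t by (intro mult_right_mono) auto
  finally have "t * k + h < L" by (simp add: L_def mult.commute)
  then show ?thesis using k1 by (simp add: nth_cwin)
qed

lemma count_digit:
  assumes d: "d < q"
  shows "card {r. r < L \<and> Wf r = d} = k * q ^ (k - 1)"
proof -
  have each: "card {t. t < N \<and> Wf (t * k + h) = d} = q ^ (k - 1)" if h: "h < k" for h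
  proof -
    let ?phi = "\<lambda>t. cwin Wf (t * k + h)"
    have "{t. t < N \<and> Wf (t * k + h) = d} = {t \<in> {0..<N}. ?phi t ! 0 = d}"
      using Wf_tk h by auto
    moreover have "card {t \<in> {0..<N}. ?phi t ! 0 = d} = card {b \<in> Words. b ! 0 = d}"
    proof -
      have "bij_betw ?phi {t \<in> {0..<N}. ?phi t ! 0 = d} {b \<in> Words. b ! 0 = d}"
        by (rule bij_betw_filter[OF phi_bij[OF h]])
      then show ?thesis by (rule bij_betw_same_card)
    qed
    moreover have "{b \<in> Words. b ! 0 = d} = (\<lambda>xs. d # xs) ` {xs. set xs \<subseteq> {0..<q} \<and> length xs = k - 1}"
    proof safe
      fix b assume b: "b \<in> Words" "d = b ! 0"
      then obtain x xs where bx: "b = x # xs" using k1 unfolding Words_def by (cases b) auto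
      show "b \<in> (\<lambda>xs. b ! 0 # xs) ` {xs. set xs \<subseteq> {0..<q} \<and> length xs = k - 1}"
        using b bx unfolding Words_def by auto
    next
      fix xs assume "set xs \<subseteq> {0..<q}" "length xs = k - 1"
      then show "d # xs \<in> Words" "(d # xs) ! 0 = d" using d k1 unfolding Words_def by auto
    qed
    moreover have "card ((\<lambda>xs. d # xs) ` {xs. set xs \<subseteq> {0..<q} \<and> length xs = k - 1}) = q ^ (k - 1)"
      by (subst card_image) (auto simp: card_lists_length_eq inj_on_def)
    ultimately show ?thesis by simp
  qed
  have "card {r. r < L \<and> Wf r = d} = (\<Sum>h<k. card {t. t < N \<and> Wf (t * k + h) = d})"
    using card_decomp[of k N "\<lambda>r. Wf r = d"] k1 by (simp add: L_def mult.commute)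
  also have "\<dots> = (\<Sum>h<k. q ^ (k - 1))" using each by simp
  finally show ?thesis by simp
qed

definition W2 :: "nat \<Rightarrow> nat" where "W2 r = Wf ((r + 1) mod L)"

lemma rot_bij: "bij_betw (\<lambda>r. (r + 1) mod L) {0..<L} {0..<L}"
proof -
  have inj: "inj_on (\<lambda>r. (r + 1) mod L) {0..<L}"
  proof (rule inj_onI)
    fix x y assume "x \<in> {0..<L}" "y \<in> {0..<L}" "(x + 1) mod L = (y + 1) mod L"
    then have "x mod L = y mod L" using mod_Suc_cancel by blast
    then show "x = y" using \<open>x \<in> {0..<L}\<close> \<open>y \<in> {0..<L}\<close> by simp
  qed
  have "(\<lambda>r. (r + 1) mod L) ` {0..<L} \<subseteq> {0..<L}" using L_pos by auto
  moreover have "card ((\<lambda>r. (r + 1) mod L) ` {0..<L}) = card {0..<L}" using card_image[OF inj] by simp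
  ultimately have "(\<lambda>r. (r + 1) mod L) ` {0..<L} = {0..<L}"
    by (intro card_subset_eq) auto
  then show ?thesis using inj by (simp add: bij_betw_def)
qed

lemma cwin_W2: "cwin W2 \<rho> = cwin Wf ((\<rho> + 1) mod L)"
  unfolding cwin_def W2_def
proof (rule map_cong[OF refl])
  fix i
  have a: "((\<rho> + i) mod L + 1) mod L = (\<rho> + i + 1) mod L" by (rule mod_add_left_eq)
  have b: "((\<rho> + 1) mod L + i) mod L = (\<rho> + 1 + i) mod L" by (rule mod_add_left_eq)
  have c: "\<rho> + i + 1 = \<rho> + 1 + i" by simp
  show "Wf (((\<rho> + i) mod L + 1) mod L) = Wf (((\<rho> + 1) mod L + i) mod L)"
    by (metis a b c)
qed

lemma count_win2:
  assumes b: "b \<in> Words"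
  shows "card {\<rho>. \<rho> < L \<and> cwin W2 \<rho> = b} = k"
proof -
  have "card {\<rho> \<in> {0..<L}. cwin Wf ((\<rho> + 1) mod L) = b} = card {\<rho> \<in> {0..<L}. cwin Wf \<rho> = b}"
    by (rule card_bij_filter[OF rot_bij])
  then show ?thesis using count_win[OF b] by (simp add: cwin_W2)
qed

lemma count_digit2:
  assumes d: "d < q"
  shows "card {r. r < L \<and> W2 r = d} = k * q ^ (k - 1)"
proof -
  have "card {\<rho> \<in> {0..<L}. Wf ((\<rho> + 1) mod L) = d} = card {\<rho> \<in> {0..<L}. Wf \<rho> = d}"
    by (rule card_bij_filter[OF rot_bij])
  then show ?thesis using count_digit[OF d] by (simp add: W2_def)
qed

lemma Wf_start: "r + 1 < k \<Longrightarrow> Wf r = \<sigma> 0"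
  by (simp add: Wf_def dg_def)
lemma W2_start: "r + 1 < k \<Longrightarrow> W2 r = \<sigma> 0"
proof -
  assume r: "r + 1 < k"
  then have "(r + 1) mod L = r + 1" using k_lt_L by simp
  then show ?thesis using r by (simp add: W2_def Wf_def dg_def)
qed

end

lemma divmod_aux3: "j < (k::nat) \<Longrightarrow> (m * k + j) div k = m" "j < k \<Longrightarrow> (m * k + j) mod k = j"
  by auto

lemma occ_mono: "m \<le> m' \<Longrightarrow> occ_count c b m \<le> occ_count c b m'"
  unfolding occ_count_def by (rule card_mono) auto

lemma occ_le: "occ_count c b m \<le> m"
proof -
  have "occ_count c b m \<le> card {..<m}" unfolding occ_count_def by (rule card_mono) auto
  then show ?thesis by simp
qed

lemma map_upt_shift: "map c [a..<a + K] = map (\<lambda>i. c (a + i)) [0..<K]"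
  by (rule nth_equalityI) auto

lemma block_window:
  fixes L K :: nat and Bf :: "bool \<Rightarrow> nat \<Rightarrow> nat" and e :: "nat \<Rightarrow> bool"
  assumes KL: "K < L"
    and pre: "\<And>\<beta> \<beta>' r. r + 1 < K \<Longrightarrow> Bf \<beta> r = Bf \<beta>' r"
    and \<rho>: "\<rho> < L"
  shows "map (\<lambda>j. Bf (e (j div L)) (j mod L)) [t * L + \<rho>..<t * L + \<rho> + K]
         = map (\<lambda>i. Bf (e t) ((\<rho> + i) mod L)) [0..<K]"
proof -
  have "Bf (e ((t * L + \<rho> + i) div L)) ((t * L + \<rho> + i) mod L) = Bf (e t) ((\<rho> + i) mod L)"
    if i: "i < K" for i
  proof (cases "\<rho> + i < L")
    case True
    have "(t * L + (\<rho> + i)) div L = t" "(t * L + (\<rho> + i)) mod L = \<rho> + i" using True by auto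
    then show ?thesis using True by (simp add: add.assoc)
  next
    case False
    define j where "j = \<rho> + i - L"
    have j: "j + 1 < K" "t * L + \<rho> + i = (t + 1) * L + j" "j < L" "\<rho> + i = L + j"
      using False i \<rho> KL by (auto simp: j_def)
    have d: "((t + 1) * L + j) div L = t + 1" "((t + 1) * L + j) mod L = j"
      using j(3) divmod_aux3 by blast+
    have m: "(\<rho> + i) mod L = j" using j(3,4) by simp
    show ?thesis unfolding j(2) d m using pre[OF j(1)] by simp
  qed
  then show ?thesis
    by (subst map_upt_shift) (auto intro!: map_cong simp: add.assoc)
qed

lemma block_occ:
  fixes L K C :: nat and Bf :: "bool \<Rightarrow> nat \<Rightarrow> nat" and e :: "nat \<Rightarrow> bool"
  assumes KL: "K < L"
    and pre: "\<And>\<beta> \<beta>' r. r + 1 < K \<Longrightarrow> Bf \<beta> r = Bf \<beta>' r"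
    and cnt: "\<And>\<beta>. card {\<rho>. \<rho> < L \<and> map (\<lambda>i. Bf \<beta> ((\<rho> + i) mod L)) [0..<K] = b} = C"
    and lb: "length b = K"
  shows "occ_count (\<lambda>j. Bf (e (j div L)) (j mod L)) b (t * L) = C * t"
proof (induct t)
  case 0 then show ?case by (simp add: occ_count_def)
next
  case (Suc t)
  let ?c = "\<lambda>j. Bf (e (j div L)) (j mod L)"
  let ?P = "\<lambda>j. map ?c [j..<j + length b] = b"
  have split: "{j. j < Suc t * L \<and> ?P j} = {j. j < t * L \<and> ?P j} \<union> (\<lambda>\<rho>. t * L + \<rho>) ` {\<rho>. \<rho> < L \<and> ?P (t * L + \<rho>)}"
  proof (rule set_eqI, rule iffI)
    fix j assume j: "j \<in> {j. j < Suc t * L \<and> ?P j}"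
    show "j \<in> {j. j < t * L \<and> ?P j} \<union> (\<lambda>\<rho>. t * L + \<rho>) ` {\<rho>. \<rho> < L \<and> ?P (t * L + \<rho>)}"
    proof (cases "j < t * L")
      case True then show ?thesis using j by auto
    next
      case False
      then have "j = t * L + (j - t * L)" "j - t * L < L" using j by auto
      then show ?thesis using j by (auto intro!: image_eqI[of _ _ "j - t * L"])
    qed
  next
    fix j assume "j \<in> {j. j < t * L \<and> ?P j} \<union> (\<lambda>\<rho>. t * L + \<rho>) ` {\<rho>. \<rho> < L \<and> ?P (t * L + \<rho>)}"
    then show "j \<in> {j. j < Suc t * L \<and> ?P j}" by auto
  qed
  have disj: "{j. j < t * L \<and> ?P j} \<inter> (\<lambda>\<rho>. t * L + \<rho>) ` {\<rho>. \<rho> < L \<and> ?P (t * L + \<rho>)} = {}" by auto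
  have ci: "card ((\<lambda>\<rho>. t * L + \<rho>) ` {\<rho>. \<rho> < L \<and> ?P (t * L + \<rho>)}) = card {\<rho>. \<rho> < L \<and> ?P (t * L + \<rho>)}"
    by (rule card_image) (auto simp: inj_on_def)
  have eqS: "{\<rho>. \<rho> < L \<and> ?P (t * L + \<rho>)} = {\<rho>. \<rho> < L \<and> map (\<lambda>i. Bf (e t) ((\<rho> + i) mod L)) [0..<K] = b}"
    using block_window[where Bf=Bf and K=K and L=L and e=e and t=t, OF KL pre] lb by auto
  have c2: "card ((\<lambda>\<rho>. t * L + \<rho>) ` {\<rho>. \<rho> < L \<and> ?P (t * L + \<rho>)}) = C"
    using ci cnt[of "e t"] by (simp only: eqS)
  have "occ_count ?c b (Suc t * L) = card {j. j < t * L \<and> ?P j} + C"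
    unfolding occ_count_def split by (subst card_Un_disjoint) (use disj c2 in auto)
  then show ?case using Suc by (simp add: occ_count_def)
qed

lemma block_bound:
  fixes L K C :: nat
  assumes L: "0 < L"
    and occ: "\<And>t. occ_count c b (t * L) = C * t"
  shows "\<bar>real (occ_count c b m) - real C / real L * real m\<bar> \<le> real C"
proof -
  define t where "t = m div L"
  have tm: "t * L \<le> m" "m < (t + 1) * L" using L by (auto simp: t_def dividend_less_div_times)
  have o1: "C * t \<le> occ_count c b m" using occ_mono[OF tm(1), of c b] occ[of t] by simp
  have o2: "occ_count c b m \<le> C * (t + 1)" using occ_mono[of m "(t+1) * L" c b] tm(2) occ[of "t+1"] by simp
  have "real (t * L) \<le> real m" using tm(1) by (simp only: of_nat_le_iff)
  then have r1a: "real t * real L \<le> real m" by simp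
  have "real m \<le> real ((t + 1) * L)" using less_imp_le[OF tm(2)] by (simp only: of_nat_le_iff)
  then have r1b: "real m \<le> (real t + 1) * real L" by (simp add: algebra_simps)
  note r1 = r1a r1b
  have Lp: "0 < real L" using L by simp
  have a1: "real C * real t \<le> real C / real L * real m"
    using mult_left_mono[OF r1(1), of "real C / real L"] Lp by (simp add: field_simps)
  have a2: "real C / real L * real m \<le> real C * (real t + 1)"
    using mult_left_mono[OF r1(2), of "real C / real L"] Lp by (simp add: field_simps)
  have "real (C * t) \<le> real (occ_count c b m)" using o1 by (simp only: of_nat_le_iff)
  then have b1: "real C * real t \<le> real (occ_count c b m)" by simp
  have "real (occ_count c b m) \<le> real (C * (t + 1))" using o2 by (simp only: of_nat_le_iff)
  then have b2: "real (occ_count c b m) \<le> real C * (real t + 1)" by (simp add: algebra_simps)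
  show ?thesis using a1 a2 b1 b2 by (simp add: abs_le_iff algebra_simps)
qed

definition snormal :: "nat \<Rightarrow> nat \<Rightarrow> (nat \<Rightarrow> nat) \<Rightarrow> bool" where
  "snormal n k c \<longleftrightarrow> (\<exists>C. \<forall>b. length b = k \<and> set b \<subseteq> {0..n} \<longrightarrow>
      (\<forall>m. \<bar>real (occ_count c b m) - real m / real (n + 1) ^ k\<bar> \<le> C))"

lemma ratio_lim:
  fixes f :: "nat \<Rightarrow> real"
  assumes "\<And>m. \<bar>f m - \<alpha> * real m\<bar> \<le> C"
  shows "(\<lambda>m. f m / real m) \<longlonglongrightarrow> \<alpha>"
proof -
  have "(\<lambda>m. f m / real m - \<alpha>) \<longlonglongrightarrow> 0"
  proof (rule Lim_null_comparison)
    show "\<forall>\<^sub>F m in sequentially. norm (f m / real m - \<alpha>) \<le> C / real m"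
    proof (rule eventually_sequentiallyI[of 1])
      fix m :: nat assume "1 \<le> m"
      then have mp: "0 < real m" by simp
      have "f m / real m - \<alpha> = (f m - \<alpha> * real m) / real m" using mp by (simp add: field_simps)
      then have "norm (f m / real m - \<alpha>) = \<bar>f m - \<alpha> * real m\<bar> / real m" by simp
      also have "\<dots> \<le> C / real m" using assms[of m] mp by (simp add: divide_right_mono)
      finally show "norm (f m / real m - \<alpha>) \<le> C / real m" .
    qed
    show "(\<lambda>m. C / real m) \<longlonglongrightarrow> 0" by (rule lim_const_over_n)
  qed
  then have "(\<lambda>m. (f m / real m - \<alpha>) + \<alpha>) \<longlonglongrightarrow> 0 + \<alpha>" by (intro tendsto_add) auto
  then show ?thesis by simp
qed

lemma snormal_imp: "snormal n k c \<Longrightarrow> k_simply_normal n k c"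
  unfolding snormal_def k_simply_normal_def
proof (elim exE, intro allI impI)
  fix C b assume C: "\<forall>b. length b = k \<and> set b \<subseteq> {0..n} \<longrightarrow> (\<forall>m. \<bar>real (occ_count c b m) - real m / real (n + 1) ^ k\<bar> \<le> C)"
    and b: "length b = k \<and> set b \<subseteq> {0..n}"
  have "\<And>m. \<bar>real (occ_count c b m) - 1 / real (n + 1) ^ k * real m\<bar> \<le> C" using C b by simp
  then show "(\<lambda>m. real (occ_count c b m) / real m) \<longlonglongrightarrow> 1 / real (n + 1) ^ k"
    by (rule ratio_lim)
qed

definition pshift :: "nat list \<Rightarrow> (nat \<Rightarrow> nat) \<Rightarrow> nat \<Rightarrow> nat" where
  "pshift u c j = (if j < length u then u ! j else c (j - length u))"

lemma occ_shift:
  "occ_count c b (m - length u) \<le> occ_count (pshift u c) b m \<and>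
   occ_count (pshift u c) b m \<le> length u + occ_count c b (m - length u)"
proof -
  let ?l = "length u"
  let ?P = "\<lambda>j. map c [j..<j + length b] = b"
  let ?P' = "\<lambda>j. map (pshift u c) [j..<j + length b] = b"
  have sh: "?P' (j + ?l) = ?P j" for j
  proof -
    have "map (pshift u c) [j + ?l..<j + ?l + length b] = map c [j..<j + length b]"
      by (rule nth_equalityI) (auto simp: pshift_def)
    then show ?thesis by simp
  qed
  have A: "(\<lambda>j. j + ?l) ` {j. j < m - ?l \<and> ?P j} \<subseteq> {j. j < m \<and> ?P' j}" using sh by auto
  have B: "{j. j < m \<and> ?P' j} \<subseteq> {..<?l} \<union> (\<lambda>j. j + ?l) ` {j. j < m - ?l \<and> ?P j}"
  proof
    fix j assume j: "j \<in> {j. j < m \<and> ?P' j}"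
    show "j \<in> {..<?l} \<union> (\<lambda>j. j + ?l) ` {j. j < m - ?l \<and> ?P j}"
    proof (cases "j < ?l")
      case False
      then have "j = (j - ?l) + ?l" by simp
      moreover have "?P (j - ?l)" using sh[of "j - ?l"] j False by simp
      ultimately show ?thesis using j False by (auto intro!: image_eqI[of _ _ "j - ?l"])
    qed auto
  qed
  have c1: "occ_count c b (m - ?l) \<le> occ_count (pshift u c) b m"
  proof -
    have "occ_count c b (m - ?l) = card ((\<lambda>j. j + ?l) ` {j. j < m - ?l \<and> ?P j})"
      unfolding occ_count_def by (rule card_image[symmetric]) (auto simp: inj_on_def)
    also have "\<dots> \<le> occ_count (pshift u c) b m" unfolding occ_count_def by (rule card_mono[OF _ A]) auto
    finally show ?thesis .
  qed
  have "occ_count (pshift u c) b m \<le> card ({..<?l} \<union> (\<lambda>j. j + ?l) ` {j. j < m - ?l \<and> ?P j})"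
    unfolding occ_count_def by (rule card_mono[OF _ B]) auto
  also have "\<dots> \<le> card {..<?l} + card ((\<lambda>j. j + ?l) ` {j. j < m - ?l \<and> ?P j})" by (rule card_Un_le)
  also have "\<dots> \<le> ?l + occ_count c b (m - ?l)"
    unfolding occ_count_def using card_image_le[of "{j. j < m - ?l \<and> ?P j}" "\<lambda>j. j + ?l"] by simp
  finally show ?thesis using c1 by simp
qed

lemma snormal_shift:
  assumes "snormal n k c"
  shows "snormal n k (pshift u c)"
proof -
  obtain C where C: "\<And>b m. length b = k \<Longrightarrow> set b \<subseteq> {0..n} \<Longrightarrow> \<bar>real (occ_count c b m) - real m / real (n + 1) ^ k\<bar> \<le> C"
    using assms unfolding snormal_def by blast
  let ?l = "length u"
  let ?a = "1 / real (n + 1) ^ k"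
  have a01: "0 \<le> ?a" "?a \<le> 1" by (auto simp: field_simps)
  show ?thesis unfolding snormal_def
  proof (intro exI allI impI)
    fix b m assume b: "length b = k \<and> set b \<subseteq> {0..n}"
    have s: "real (occ_count c b (m - ?l)) \<le> real (occ_count (pshift u c) b m)"
      "real (occ_count (pshift u c) b m) \<le> real ?l + real (occ_count c b (m - ?l))"
      using occ_shift[of c b m u] by (simp_all del: of_nat_add add: of_nat_add[symmetric])
    have c: "\<bar>real (occ_count c b (m - ?l)) - ?a * real (m - ?l)\<bar> \<le> C" using C[of b "m - ?l"] b by simp
    have d: "real m - real ?l \<le> real (m - ?l)" "real (m - ?l) \<le> real m" by auto
    have e1: "?a * real (m - ?l) \<le> ?a * real m" by (rule mult_left_mono[OF d(2) a01(1)])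
    have "?a * (real m - real ?l) \<le> ?a * real (m - ?l)" by (rule mult_left_mono[OF d(1) a01(1)])
    then have e2: "?a * real m - ?a * real ?l \<le> ?a * real (m - ?l)" by (simp only: right_diff_distrib)
    have e3: "?a * real ?l \<le> real ?l" by (rule mult_left_le_one_le) (use a01 in auto)
    show "\<bar>real (occ_count (pshift u c) b m) - real m / real (n + 1) ^ k\<bar> \<le> C + 2 * real ?l"
      using s c e1 e2 e3 by (simp add: abs_le_iff)
  qed
qed

context ifs
begin

lemma map_pshift: "map (pshift u c) [0..<length u + j] = u @ map c [0..<j]"
  by (rule nth_equalityI) (auto simp: pshift_def nth_append)

lemma pshift_coding:
  assumes lim: "(\<lambda>j. comp_prefix S c j 0) \<longlonglongrightarrow> y"
  shows "(\<lambda>j. comp_prefix S (pshift u c) j 0) \<longlonglongrightarrow> Sw u y"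
proof (rule LIMSEQ_offset[where k = "length u"])
  have e: "comp_prefix S (pshift u c) (j + length u) 0 = rat u * comp_prefix S c j 0 + Sw u 0" for j
  proof -
    have "comp_prefix S (pshift u c) (j + length u) 0 = Sw u (comp_prefix S c j 0)"
      unfolding comp_prefix_eq using map_pshift[of u c j] by (simp add: Sw_append add.commute)
    then show ?thesis by (simp add: Sw_affine[of u "comp_prefix S c j 0"])
  qed
  have "(\<lambda>j. rat u * comp_prefix S c j 0 + Sw u 0) \<longlonglongrightarrow> rat u * y + Sw u 0"
    by (intro tendsto_intros lim)
  then show "(\<lambda>j. comp_prefix S (pshift u c) (j + length u) 0) \<longlonglongrightarrow> Sw u y"
    unfolding e by (simp add: Sw_affine[of u y])
qed

lemma fix_form: "Sw w lo = lo \<Longrightarrow> Sw w z = lo + rat w * (z - lo)"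
  using Sw_diff[of w z lo] by (simp add: algebra_simps)

lemma two_block_coding:
  fixes Blo Bhi :: "nat list" and L :: nat and \<Lambda> lo hi x A B :: real
  assumes lens: "length Blo = L" "length Bhi = L" "0 < L"
    and sets: "set Blo \<subseteq> {0..n}" "set Bhi \<subseteq> {0..n}"
    and fx: "Sw Blo lo = lo" "Sw Bhi hi = hi"
    and rt: "rat Blo = \<Lambda>" "rat Bhi = \<Lambda>" "1 / 2 \<le> \<Lambda>"
    and lohi: "lo < hi" and x: "lo \<le> x" "x \<le> hi"
    and bnds: "A \<le> lo" "hi \<le> B" "A \<le> 0" "0 \<le> B" "\<And>i. i \<le> n \<Longrightarrow> A \<le> p i \<and> p i \<le> B"
  shows "\<exists>e. (\<lambda>j. comp_prefix S (\<lambda>j. (if e (j div L) then Bhi else Blo) ! (j mod L)) j 0) \<longlonglongrightarrow> x"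
proof -
  have Lp: "0 < \<Lambda>" using rat_pos[OF sets(1)] rt by simp
  have L1: "\<Lambda> < 1" using rat_lt1[OF sets(1)] lens rt by auto
  define thr where "thr = lo + \<Lambda> * (hi - lo)"
  define g where "g y = (if y \<le> thr then lo + (y - lo) / \<Lambda> else hi + (y - hi) / \<Lambda>)" for y
  define st where "st m = (g ^^ m) x" for m
  define e where "e m = (\<not> st m \<le> thr)" for m
  define Blk where "Blk \<beta> = (if \<beta> then Bhi else Blo)" for \<beta>
  define c where "c j = Blk (e (j div L)) ! (j mod L)" for j
  have st0: "st 0 = x" and stS: "st (Suc m) = g (st m)" for m by (simp_all add: st_def)
  have inv: "lo \<le> st m \<and> st m \<le> hi" for m
  proof (induct m)
    case 0 then show ?case using x by (simp add: st0)
  next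
    case (Suc m)
    let ?y = "st m"
    show ?case
    proof (cases "?y \<le> thr")
      case True
      have "0 \<le> (?y - lo) / \<Lambda>" using Suc Lp by simp
      moreover have "(?y - lo) / \<Lambda> \<le> hi - lo" using True Lp by (simp add: thr_def field_simps)
      ultimately show ?thesis using True by (simp add: stS g_def)
    next
      case False
      have "(?y - hi) / \<Lambda> \<le> 0" using Suc Lp by (simp add: divide_nonpos_pos)
      moreover have "lo - hi \<le> (?y - hi) / \<Lambda>"
      proof -
        have h0: "(hi - lo) * (1 - 2 * \<Lambda>) \<le> 0" using lohi rt(3) by (intro mult_nonneg_nonpos) auto
        have "(lo - hi) * \<Lambda> \<le> thr - hi"
          using h0 unfolding thr_def by (simp add: algebra_simps)
        also have "\<dots> \<le> ?y - hi" using False by simp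
        finally show ?thesis using Lp by (simp add: field_simps)
      qed
      ultimately show ?thesis using False by (simp add: stS g_def)
    qed
  qed
  have step: "Sw (Blk (e m)) (st (Suc m)) = st m" for m
  proof (cases "st m \<le> thr")
    case True
    then have "Sw (Blk (e m)) (st (Suc m)) = lo + \<Lambda> * ((st m - lo) / \<Lambda>)"
      by (simp add: Blk_def e_def stS g_def fix_form[OF fx(1)] rt)
    then show ?thesis using Lp by simp
  next
    case False
    then have "Sw (Blk (e m)) (st (Suc m)) = hi + \<Lambda> * ((st m - hi) / \<Lambda>)"
      by (simp add: Blk_def e_def stS g_def fix_form[OF fx(2)] rt)
    then show ?thesis using Lp by simp
  qed
  have blk: "map c [m * L..<m * L + L] = Blk (e m)" for m
  proof (rule nth_equalityI)
    show "length (map c [m * L..<m * L + L]) = length (Blk (e m))" using lens by (simp add: Blk_def)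
    fix i assume "i < length (map c [m * L..<m * L + L])"
    then have i: "i < L" by simp
    have "(m * L + i) div L = m" "(m * L + i) mod L = i" using i by auto
    then show "map c [m * L..<m * L + L] ! i = Blk (e m) ! i" using i by (simp add: c_def)
  qed
  have pre: "x = Sw (map c [0..<m * L]) (st m)" for m
  proof (induct m)
    case 0 then show ?case by (simp add: st0)
  next
    case (Suc m)
    have "[0..<Suc m * L] = [0..<m * L + L]" by (simp add: add.commute)
    also have "\<dots> = [0..<m * L] @ [m * L..<m * L + L]" by (rule upt_add_eq_append) simp
    finally have "[0..<Suc m * L] = [0..<m * L] @ [m * L..<m * L + L]" .
    then have "map c [0..<Suc m * L] = map c [0..<m * L] @ Blk (e m)" using blk by simp
    then have "Sw (map c [0..<Suc m * L]) (st (Suc m)) = Sw (map c [0..<m * L]) (st m)"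
      by (simp add: Sw_append step)
    then show ?case using Suc by simp
  qed
  have csets: "c j \<in> {0..n}" for j
  proof -
    have jl: "j mod L < length Blo" "j mod L < length Bhi" using lens by simp_all
    have "Blo ! (j mod L) \<in> set Blo" "Bhi ! (j mod L) \<in> set Bhi" using nth_mem jl by blast+
    then show ?thesis using sets unfolding c_def Blk_def by auto
  qed
  have lim: "(\<lambda>j. comp_prefix S c j 0) \<longlonglongrightarrow> x"
  proof (rule LIMSEQ_I)
    fix r :: real assume r: "0 < r"
    have BA: "0 \<le> B - A" using bnds by simp
    obtain M where M: "lmax ^ M < r / (B - A + 1)"
      using real_arch_pow_inv[of "r / (B - A + 1)" lmax] r BA lmax by auto
    show "\<exists>no. \<forall>j\<ge>no. norm (comp_prefix S c j 0 - x) < r"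
    proof (intro exI allI impI)
      fix j assume j: "M * L \<le> j"
      let ?P = "map c [0..<M * L]"
      let ?z = "Sw (map c [M * L..<j]) 0"
      have "[0..<j] = [0..<M * L] @ [M * L..<j]" using j by (metis le_add_diff_inverse upt_add_eq_append zero_le)
      then have cp: "comp_prefix S c j 0 = Sw ?P ?z" by (simp add: comp_prefix_eq Sw_append)
      have Pset: "set ?P \<subseteq> {0..n}" "set (map c [M * L..<j]) \<subseteq> {0..n}" using csets by auto
      have zAB: "A \<le> ?z" "?z \<le> B"
        using Sw_lower[OF Pset(2), of A 0] Sw_upper[OF Pset(2), of B 0] bnds by auto
      have stAB: "A \<le> st M" "st M \<le> B" using inv[of M] bnds by auto
      have "norm (comp_prefix S c j 0 - x) = rat ?P * \<bar>?z - st M\<bar>"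
        using cp pre[of M] Sw_diff[of ?P ?z "st M"] rat_pos[OF Pset(1)] by (simp add: abs_mult)
      also have "\<dots> \<le> lmax ^ (M * L) * (B - A)"
      proof (rule mult_mono)
        show "rat ?P \<le> lmax ^ (M * L)" using rat_le_pow[OF Pset(1)] by simp
        show "\<bar>?z - st M\<bar> \<le> B - A" using zAB stAB by simp
      qed (use lmax in auto)
      also have "\<dots> \<le> lmax ^ M * (B - A)"
      proof (rule mult_right_mono)
        have "M \<le> M * L" using lens by simp
        then show "lmax ^ (M * L) \<le> lmax ^ M" using lmax by (intro power_decreasing) auto
      qed (use BA in auto)
      also have "\<dots> \<le> r / (B - A + 1) * (B - A)"
        using M BA by (intro mult_right_mono) auto
      also have "\<dots> < r"
      proof -
        have "r / (B - A + 1) * (B - A) = r * ((B - A) / (B - A + 1))" by simp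
        also have "\<dots> < r * 1" using r BA by (intro mult_strict_left_mono) auto
        finally show ?thesis by simp
      qed
      finally show "norm (comp_prefix S c j 0 - x) < r" .
    qed
  qed
  have cc: "(\<lambda>j. (if e (j div L) then Bhi else Blo) ! (j mod L)) = c"
    by (simp add: fun_eq_iff c_def Blk_def)
  show ?thesis
    by (rule exI[of _ e]) (simp only: cc lim)
qed

end

lemma aff_img_open:
  fixes r t l h :: real
  assumes r: "0 < r"
  shows "(\<lambda>x. r * x + t) ` {l<..<h} = {r * l + t<..<r * h + t}"
proof (rule set_eqI, rule iffI)
  fix y assume "y \<in> (\<lambda>x. r * x + t) ` {l<..<h}"
  then obtain x where x: "l < x" "x < h" "y = r * x + t" by auto
  have "r * l < r * x" "r * x < r * h" using x r by auto
  then show "y \<in> {r * l + t<..<r * h + t}" using x by auto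
next
  fix y assume y: "y \<in> {r * l + t<..<r * h + t}"
  have "l < (y - t) / r" "(y - t) / r < h" using y r by (auto simp: field_simps)
  moreover have "y = r * ((y - t) / r) + t" using r by simp
  ultimately show "y \<in> (\<lambda>x. r * x + t) ` {l<..<h}" by (intro image_eqI[of _ _ "(y - t) / r"]) auto
qed

lemma aff_img_closed:
  fixes r t l h :: real
  assumes r: "0 < r"
  shows "(\<lambda>x. r * x + t) ` {l..h} = {r * l + t..r * h + t}"
proof (rule set_eqI, rule iffI)
  fix y assume "y \<in> (\<lambda>x. r * x + t) ` {l..h}"
  then obtain x where x: "l \<le> x" "x \<le> h" "y = r * x + t" by auto
  have "r * l \<le> r * x" "r * x \<le> r * h" using x r by auto
  then show "y \<in> {r * l + t..r * h + t}" using x by auto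
next
  fix y assume y: "y \<in> {r * l + t..r * h + t}"
  have "l \<le> (y - t) / r" "(y - t) / r \<le> h" using y r by (auto simp: field_simps)
  moreover have "y = r * ((y - t) / r) + t" using r by simp
  ultimately show "y \<in> (\<lambda>x. r * x + t) ` {l..h}" by (intro image_eqI[of _ _ "(y - t) / r"]) auto
qed

locale main = ifs +
  fixes k :: nat and X :: "real set"
  assumes dist: "\<exists>i\<in>{0..n}. \<exists>j\<in>{0..n}. p i \<noteq> p j"
    and k1: "k \<ge> 1"
    and prodh: "(\<Prod>i\<in>{0..n}. lam i ^ (k * (n + 1) ^ (k - 1))) \<ge> 1 / 2"
    and Xne: "X \<noteq> {}" and Xc: "compact X"
    and Xeq: "X = (\<Union>i\<in>{0..n}. ifs_map lam p i ` X)"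
begin

definition "a = Min (p ` {0..n})"
definition "b = Max (p ` {0..n})"

lemma ab_bounds: "i \<le> n \<Longrightarrow> a \<le> p i \<and> p i \<le> b"
  unfolding a_def b_def by (auto intro: Min_le Max_ge)

lemma ab_attained: "\<exists>i0\<le>n. p i0 = a" "\<exists>i1\<le>n. p i1 = b"
proof -
  have ne: "p ` {0..n} \<noteq> {}" by auto
  have "a \<in> p ` {0..n}" unfolding a_def by (rule Min_in) (use ne in auto)
  then show "\<exists>i0\<le>n. p i0 = a" by auto
  have "b \<in> p ` {0..n}" unfolding b_def by (rule Max_in) (use ne in auto)
  then show "\<exists>i1\<le>n. p i1 = b" by auto
qed

definition "i0 = (SOME i. i \<le> n \<and> p i = a)"
definition "i1 = (SOME i. i \<le> n \<and> p i = b)"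

lemma i0: "i0 \<le> n" "p i0 = a" using someI_ex[OF ab_attained(1)[unfolded Bex_def[symmetric]]]
  unfolding i0_def by (metis (mono_tags, lifting) ab_attained(1) someI_ex)+
lemma i1: "i1 \<le> n" "p i1 = b"
  unfolding i1_def by (metis (mono_tags, lifting) ab_attained(2) someI_ex)+

lemma a_lt_b: "a < b"
proof -
  obtain i j where "i \<le> n" "j \<le> n" "p i \<noteq> p j" using dist by auto
  then show ?thesis using ab_bounds[of i] ab_bounds[of j] by fastforce
qed

lemma i01: "i0 \<noteq> i1" using i0 i1 a_lt_b by auto

lemma n1: "1 \<le> n" using i0 i1 i01 by linarith

lemma S_sub: "S i ` X \<subseteq> X" if "i \<le> n" for i
proof
  fix y assume "y \<in> S i ` X"
  then have "y \<in> (\<Union>i\<in>{0..n}. ifs_map lam p i ` X)" using that by (auto simp: S_def)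
  then show "y \<in> X" by (subst Xeq)
qed

lemma Sw_X: "set u \<subseteq> {0..n} \<Longrightarrow> z \<in> X \<Longrightarrow> Sw u z \<in> X"
proof (induct u)
  case (Cons i u)
  then show ?case using S_sub[of i] by auto
qed simp

lemma lam_pair: "1 / 2 \<le> lam i0 * lam i1"
proof -
  define E where "E = k * (n + 1) ^ (k - 1)"
  have E1: "1 \<le> E" using k1 by (simp add: E_def)
  have l: "0 < lam i" "lam i < 1" if "i \<le> n" for i using lam01 that by auto
  have "(\<Prod>i\<in>{0..n}. lam i ^ E) = lam i0 ^ E * (\<Prod>i\<in>{0..n} - {i0}. lam i ^ E)"
    using i0 by (subst prod.remove[of _ i0]) auto
  also have "(\<Prod>i\<in>{0..n} - {i0}. lam i ^ E) = lam i1 ^ E * (\<Prod>i\<in>{0..n} - {i0} - {i1}. lam i ^ E)"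
    using i1 i01 by (subst prod.remove[of _ i1]) auto
  also have "(\<Prod>i\<in>{0..n} - {i0} - {i1}. lam i ^ E) \<le> 1"
    using l by (intro prod_le_1) (auto intro: power_le_one less_imp_le)
  finally have "(\<Prod>i\<in>{0..n}. lam i ^ E) \<le> lam i0 ^ E * (lam i1 ^ E * 1)"
    using l i0 i1 by (auto intro!: mult_left_mono)
  also have "\<dots> \<le> lam i0 * lam i1"
  proof -
    have "lam i0 ^ E \<le> lam i0 ^ 1" by (rule power_decreasing[OF E1]) (use l[OF i0(1)] in auto)
    moreover have "lam i1 ^ E \<le> lam i1 ^ 1" by (rule power_decreasing[OF E1]) (use l[OF i1(1)] in auto)
    ultimately have "lam i0 ^ E \<le> lam i0" "lam i1 ^ E \<le> lam i1" by simp_all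
    moreover have "0 < lam i0" "0 < lam i1" using lam01 i0 i1 by auto
    ultimately show ?thesis by (intro mult_mono) auto
  qed
  finally show ?thesis using prodh by (simp add: E_def)
qed

lemma lam_sum: "1 < lam i0 + lam i1"
proof -
  have "0 \<le> (lam i0 - lam i1)^2" by simp
  then have "4 * (lam i0 * lam i1) \<le> (lam i0 + lam i1)^2" by (simp add: power2_eq_square algebra_simps)
  then have h2: "2 \<le> (lam i0 + lam i1) * (lam i0 + lam i1)" using lam_pair by (simp add: power2_eq_square)
  have pos: "0 \<le> lam i0 + lam i1" using lam01 i0 i1 by (simp add: add_nonneg_nonneg less_imp_le)
  show ?thesis
  proof (rule ccontr)
    assume "\<not> 1 < lam i0 + lam i1"
    then have "lam i0 + lam i1 \<le> 1" by simp
    then have "(lam i0 + lam i1) * (lam i0 + lam i1) \<le> 1" using pos by (intro mult_le_one) auto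
    then show False using h2 by simp
  qed
qed

lemma cover1: "a \<le> x \<Longrightarrow> x \<le> b \<Longrightarrow> \<exists>i\<le>n. \<exists>y. a \<le> y \<and> y \<le> b \<and> x = S i y"
proof -
  assume x: "a \<le> x" "x \<le> b"
  have l0: "0 < lam i0" "lam i0 < 1" and l1: "0 < lam i1" "lam i1 < 1" using lam01 i0 i1 by auto
  show ?thesis
  proof (cases "x \<le> a + lam i0 * (b - a)")
    case True
    define y where "y = a + (x - a) / lam i0"
    have "a \<le> y" using x l0 by (simp add: y_def)
    moreover have "y \<le> b"
    proof -
      have "x - a \<le> (b - a) * lam i0" using True by (simp add: algebra_simps)
      then have "(x - a) / lam i0 \<le> b - a" by (simp add: pos_divide_le_eq l0)
      then show ?thesis by (simp add: y_def)
    qed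
    moreover have "x = S i0 y"
    proof -
      have "lam i0 * ((x - a) / lam i0) = x - a" using l0 by simp
      then show ?thesis unfolding S_eq y_def i0(2) by (simp add: distrib_left algebra_simps)
    qed
    ultimately show ?thesis using i0 by blast
  next
    case False
    define y where "y = b + (x - b) / lam i1"
    have "y \<le> b" using x l1 by (simp add: y_def divide_nonpos_pos)
    moreover have "a \<le> y"
    proof -
      have "(b - a) * (1 - lam i0) \<le> (b - a) * lam i1"
        using lam_sum a_lt_b by (intro mult_left_mono) auto
      then have "(a - b) * lam i1 \<le> x - b" using False by (simp add: algebra_simps)
      then have "a - b \<le> (x - b) / lam i1" by (simp add: pos_le_divide_eq l1)
      then show ?thesis by (simp add: y_def)
    qed
    moreover have "x = S i1 y"
    proof -
      have "lam i1 * ((x - b) / lam i1) = x - b" using l1 by simp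
      then show ?thesis unfolding S_eq y_def i1(2) by (simp add: distrib_left algebra_simps)
    qed
    ultimately show ?thesis using i1 by blast
  qed
qed

lemma cover_level:
  "a \<le> x \<Longrightarrow> x \<le> b \<Longrightarrow> \<exists>u. length u = m \<and> set u \<subseteq> {0..n} \<and> (\<exists>y. a \<le> y \<and> y \<le> b \<and> x = Sw u y)"
proof (induct m arbitrary: x)
  case 0 then show ?case by (intro exI[of _ "[]"]) auto
next
  case (Suc m)
  obtain i y where iy: "i \<le> n" "a \<le> y" "y \<le> b" "x = S i y" using cover1 Suc.prems by blast
  obtain u z where uz: "length u = m" "set u \<subseteq> {0..n}" "a \<le> z" "z \<le> b" "y = Sw u z"
    using Suc.hyps[OF iy(2,3)] by blast
  show ?case using iy uz by (intro exI[of _ "i # u"]) auto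
qed

lemma X_sub: "X \<subseteq> {a..b}"
proof -
  obtain s where s: "s \<in> X" "\<And>t. t \<in> X \<Longrightarrow> t \<le> s" using compact_attains_sup[OF Xc Xne] by blast
  obtain s' where s': "s' \<in> X" "\<And>t. t \<in> X \<Longrightarrow> s' \<le> t" using compact_attains_inf[OF Xc Xne] by blast
  have "s \<le> b"
  proof -
    have "s \<in> (\<Union>i\<in>{0..n}. ifs_map lam p i ` X)" using s(1) by (subst Xeq[symmetric])
    then obtain i y where iy: "i \<le> n" "y \<in> X" "s = S i y" by (auto simp: S_def)
    have l: "0 < lam i" "lam i < 1" using lam01 iy by auto
    have "y \<le> s" using s iy by auto
    then have "lam i * y \<le> lam i * s" using l by (intro mult_left_mono) auto
    then have "s \<le> lam i * s + (1 - lam i) * p i" using iy by (simp add: S_eq)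
    then have "(1 - lam i) * s \<le> (1 - lam i) * p i" by (simp add: algebra_simps)
    then have "s \<le> p i" using l by simp
    then show ?thesis using ab_bounds[OF iy(1)] by simp
  qed
  moreover have "a \<le> s'"
  proof -
    have "s' \<in> (\<Union>i\<in>{0..n}. ifs_map lam p i ` X)" using s'(1) by (subst Xeq[symmetric])
    then obtain i y where iy: "i \<le> n" "y \<in> X" "s' = S i y" by (auto simp: S_def)
    have l: "0 < lam i" "lam i < 1" using lam01 iy by auto
    have "s' \<le> y" using s' iy by auto
    then have "lam i * s' \<le> lam i * y" using l by (intro mult_left_mono) auto
    then have "lam i * s' + (1 - lam i) * p i \<le> s'" using iy by (simp add: S_eq)
    then have "(1 - lam i) * p i \<le> (1 - lam i) * s'" by (simp add: algebra_simps)
    then have "p i \<le> s'" using l by simp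
    then show ?thesis using ab_bounds[OF iy(1)] by simp
  qed
  ultimately show ?thesis using s s' by force
qed

lemma approx_level:
  assumes x: "a \<le> x" "x \<le> b" and z: "a \<le> z" "z \<le> b" and r: "0 < r"
  shows "\<exists>u. set u \<subseteq> {0..n} \<and> \<bar>Sw u z - x\<bar> < r \<and> (\<exists>y. a \<le> y \<and> y \<le> b \<and> x = Sw u y) \<and> rat u * (b - a) < r"
proof -
  obtain m where m: "lmax ^ m < r / (b - a)"
    using real_arch_pow_inv[of "r / (b - a)" lmax] r a_lt_b lmax by auto
  obtain u y where uy: "length u = m" "set u \<subseteq> {0..n}" "a \<le> y" "y \<le> b" "x = Sw u y"
    using cover_level[OF x, of m] by blast
  have ru: "rat u * (b - a) < r"
  proof -
    have "rat u * (b - a) \<le> lmax ^ m * (b - a)" using rat_le_pow[OF uy(2)] uy(1) a_lt_b by (intro mult_right_mono) auto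
    also have "\<dots> < r" using m a_lt_b by (simp add: field_simps)
    finally show ?thesis .
  qed
  have "\<bar>Sw u z - x\<bar> = rat u * \<bar>z - y\<bar>" using Sw_diff[of u z y] uy rat_pos[OF uy(2)] by (simp add: abs_mult)
  also have "\<dots> \<le> rat u * (b - a)" using z uy rat_pos[OF uy(2)] by (intro mult_left_mono) auto
  finally show ?thesis using ru uy by (intro exI[of _ u]) auto
qed

lemma X_eq: "X = {a..b}"
proof
  show "X \<subseteq> {a..b}" by (rule X_sub)
  show "{a..b} \<subseteq> X"
  proof
    fix x assume x: "x \<in> {a..b}"
    obtain z where z: "z \<in> X" using Xne by auto
    have zab: "a \<le> z" "z \<le> b" using z X_sub by auto
    have "x \<in> closure X"
    proof (rule closure_approachable[THEN iffD2], intro allI impI)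
      fix r :: real assume "0 < r"
      then obtain u where u: "set u \<subseteq> {0..n}" "\<bar>Sw u z - x\<bar> < r"
        using approx_level[of x z r] x zab by auto
      then show "\<exists>y\<in>X. dist y x < r" using Sw_X[OF u(1) z] by (auto simp: dist_real_def)
    qed
    then show "x \<in> X" using Xc by (simp add: compact_imp_closed closure_closed)
  qed
qed

end

lemma prod_count:
  fixes lam :: "nat \<Rightarrow> real" and f :: "nat \<Rightarrow> nat"
  assumes fr: "\<And>r. f r < Q" and cnt: "\<And>i. i < Q \<Longrightarrow> card {r. r < L \<and> f r = i} = E"
  shows "prod_list (map lam (map f [0..<L])) = (\<Prod>i\<in>{0..<Q}. lam i ^ E)"
proof -
  have "prod_list (map lam (map f [0..<L])) = prod (\<lambda>r. lam (f r)) {0..<L}"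
    using prod.distinct_set_conv_list[of "[0..<L]" "\<lambda>r. lam (f r)"] by (simp add: o_def)
  also have "\<dots> = (\<Prod>i\<in>{0..<Q}. prod (\<lambda>r. lam (f r)) {r. r \<in> {0..<L} \<and> f r = i})"
    by (rule prod.group[symmetric]) (use fr in auto)
  also have "\<dots> = (\<Prod>i\<in>{0..<Q}. lam i ^ E)"
  proof (rule prod.cong[OF refl])
    fix i assume i: "i \<in> {0..<Q}"
    have "prod (\<lambda>r. lam (f r)) {r. r \<in> {0..<L} \<and> f r = i} = prod (\<lambda>r. lam i) {r. r \<in> {0..<L} \<and> f r = i}"
      by (rule prod.cong) auto
    also have "\<dots> = lam i ^ card {r. r \<in> {0..<L} \<and> f r = i}" by simp
    also have "card {r. r \<in> {0..<L} \<and> f r = i} = E" using cnt[of i] i by simp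
    finally show "prod (\<lambda>r. lam (f r)) {r. r \<in> {0..<L} \<and> f r = i} = lam i ^ E" .
  qed
  finally show ?thesis .
qed

context main
begin

definition \<sigma> :: "nat \<Rightarrow> nat" where "\<sigma> x = (if x = 0 then i0 else if x = i0 then 0 else x)"

lemma sig_bij: "bij_betw \<sigma> {0..<n + 1} {0..<n + 1}"
proof (rule bij_betw_byWitness[where f' = \<sigma>])
  show "\<forall>x\<in>{0..<n + 1}. \<sigma> (\<sigma> x) = x" by (auto simp: \<sigma>_def)
  show "\<forall>x\<in>{0..<n + 1}. \<sigma> (\<sigma> x) = x" by (auto simp: \<sigma>_def)
  show "\<sigma> ` {0..<n + 1} \<subseteq> {0..<n + 1}" using i0 by (auto simp: \<sigma>_def)
  show "\<sigma> ` {0..<n + 1} \<subseteq> {0..<n + 1}" using i0 by (auto simp: \<sigma>_def)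
qed

sublocale C: comb "n + 1" k \<sigma>
  by unfold_locales (use n1 k1 sig_bij in auto)

definition "blk1 = map C.Wf [0..<C.L]"
definition "blk2 = map C.W2 [0..<C.L]"
definition "P = (\<Prod>i\<in>{0..n}. lam i ^ (k * (n + 1) ^ (k - 1)))"

lemma W2_lt: "C.W2 r < n + 1" unfolding C.W2_def by (rule C.Wf_lt)

lemma blk_sets: "set blk1 \<subseteq> {0..n}" "set blk2 \<subseteq> {0..n}"
  using C.Wf_lt W2_lt by (auto simp: blk1_def blk2_def less_Suc_eq_le)

lemma blk_len: "length blk1 = C.L" "length blk2 = C.L" by (simp_all add: blk1_def blk2_def)

lemma rat_blk: "rat blk1 = P" "rat blk2 = P"
proof -
  have e: "{0..<n + 1} = {0..n}" by auto
  show "rat blk1 = P" unfolding rat_def blk1_def P_def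
    by (subst prod_count[where Q = "n + 1" and E = "k * (n + 1) ^ (k - 1)"]) (use C.Wf_lt C.count_digit e in auto)
  show "rat blk2 = P" unfolding rat_def blk2_def P_def
    by (subst prod_count[where Q = "n + 1" and E = "k * (n + 1) ^ (k - 1)"]) (use W2_lt C.count_digit2 e in auto)
qed

lemma P_bounds: "1 / 2 \<le> P" "P < 1" "0 < P"
proof -
  show "1 / 2 \<le> P" using prodh by (simp add: P_def)
  have "blk1 \<noteq> []" using C.L_pos blk_len by auto
  then show "P < 1" using rat_lt1[OF blk_sets(1)] rat_blk by simp
  show "0 < P" using rat_pos[OF blk_sets(1)] rat_blk by simp
qed

definition "f1 = Sw blk1 0 / (1 - P)"
definition "f2 = Sw blk2 0 / (1 - P)"

lemma f_fix: "Sw blk1 f1 = f1" "Sw blk2 f2 = f2"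
proof -
  have d: "1 - P \<noteq> 0" using P_bounds by simp
  show "Sw blk1 f1 = f1" using Sw_affine[of blk1 f1] rat_blk d by (simp add: f1_def field_simps)
  show "Sw blk2 f2 = f2" using Sw_affine[of blk2 f2] rat_blk d by (simp add: f2_def field_simps)
qed

lemma fix_unique: "rat w < 1 \<Longrightarrow> Sw w x = x \<Longrightarrow> Sw w y = y \<Longrightarrow> x = y"
proof -
  assume r: "rat w < 1" and x: "Sw w x = x" and y: "Sw w y = y"
  have "x - y = rat w * (x - y)" using Sw_diff[of w x y] x y by simp
  then have "(1 - rat w) * (x - y) = 0" by (simp add: algebra_simps)
  then show "x = y" using r by simp
qed

definition "R = map C.Wf [1..<C.L]"

lemma Wf0: "C.Wf 0 = i0" unfolding C.Wf_def by (simp add: dg_def \<sigma>_def)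

lemma Wf0s: "comb.Wf (Suc n) k \<sigma> 0 = i0" using Wf0 by simp

lemma blk_decomp: "blk1 = i0 # R" "blk2 = R @ [i0]"
proof -
  have e: "[0..<C.L] = 0 # [1..<C.L]" using C.L_pos by (simp add: upt_conv_Cons)
  show "blk1 = i0 # R" unfolding blk1_def R_def e list.map(2) Wf0 ..
  show "blk2 = R @ [i0]"
  proof (rule nth_equalityI)
    show "length blk2 = length (R @ [i0])" using C.L_pos by (simp add: blk2_def R_def)
    fix r assume "r < length blk2"
    then have r: "r < C.L" by (simp add: blk2_def)
    have b2: "blk2 ! r = C.Wf ((r + 1) mod C.L)" unfolding blk2_def C.W2_def using r by simp
    show "blk2 ! r = (R @ [i0]) ! r"
    proof (cases "r + 1 < C.L")
      case True
      have rl: "r < C.L - 1" using True by linarith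
      have "(R @ [i0]) ! r = R ! r" using rl by (simp add: R_def nth_append)
      also have "\<dots> = C.Wf (1 + r)" unfolding R_def using rl by simp
      finally have "(R @ [i0]) ! r = C.Wf (1 + r)" .
      then show ?thesis using b2 True by (simp add: add.commute)
    next
      case False
      then have rL: "r + 1 = C.L" using r by simp
      then have "(r + 1) mod C.L = 0" by simp
      then have "blk2 ! r = i0" using b2 Wf0 by simp
      moreover have "(R @ [i0]) ! r = i0"
      proof -
        have "length R = r" unfolding R_def using rL by simp
        then show ?thesis using nth_append_length[of R i0] by simp
      qed
      ultimately show ?thesis by simp
    qed
  qed
qed

lemma f1_eq: "f1 = S i0 f2"
proof -
  have "Sw blk1 (S i0 f2) = S i0 (Sw R (S i0 f2))" by (simp add: blk_decomp)
  also have "Sw R (S i0 f2) = Sw blk2 f2" by (simp add: blk_decomp Sw_append)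
  finally have "Sw blk1 (S i0 f2) = S i0 f2" using f_fix by simp
  then show ?thesis using fix_unique[of blk1 f1 "S i0 f2"] f_fix rat_blk P_bounds by simp
qed

lemma fix_in_ab:
  assumes "set w \<subseteq> {0..n}" "w \<noteq> []" "Sw w f = f"
  shows "a \<le> f" "f \<le> b"
proof -
  have r: "0 < rat w" "rat w < 1" using rat_pos rat_lt1 assms by auto
  have "a \<le> Sw w a" using Sw_lower[OF assms(1), of a a] ab_bounds by auto
  moreover have "Sw w a = f + rat w * (a - f)" using fix_form[OF assms(3)] by simp
  ultimately have "(1 - rat w) * (a - f) \<le> 0" by (simp add: algebra_simps)
  then show "a \<le> f" using r by (simp add: mult_le_0_iff)
  have "Sw w b \<le> b" using Sw_upper[OF assms(1), of b b] ab_bounds by auto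
  moreover have "Sw w b = f + rat w * (b - f)" using fix_form[OF assms(3)] by simp
  ultimately have "(1 - rat w) * (f - b) \<le> 0" by (simp add: algebra_simps)
  then show "f \<le> b" using r by (simp add: mult_le_0_iff)
qed

lemma f_ab: "a \<le> f1" "f1 \<le> b" "a \<le> f2" "f2 \<le> b"
proof -
  have ne: "blk1 \<noteq> []" "blk2 \<noteq> []" using C.L_pos blk_len by auto
  show "a \<le> f1" "f1 \<le> b" using fix_in_ab[OF blk_sets(1) ne(1) f_fix(1)] by auto
  show "a \<le> f2" "f2 \<le> b" using fix_in_ab[OF blk_sets(2) ne(2) f_fix(2)] by auto
qed

lemma f2_gt: "a < f2"
proof -
  have "card {r. r < C.L \<and> C.W2 r = i1} = k * (n + 1) ^ (k - 1)" using C.count_digit2[of i1] i1 by simp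
  moreover have "0 < k * (n + 1) ^ (k - 1)" using k1 by simp
  ultimately obtain r where r: "r < C.L" "C.W2 r = i1" by (metis (mono_tags, lifting) Collect_empty_eq card.empty less_irrefl)
  have "i1 \<in> set blk2" unfolding blk2_def using r by (auto intro!: image_eqI[of _ _ r])
  then have ex: "\<exists>i\<in>set blk2. a < p i" using i1 a_lt_b by (intro bexI[of _ i1]) auto
  have "a < Sw blk2 a" by (rule Sw_strict[OF blk_sets(2) _ _ ex]) (use ab_bounds in auto)
  moreover have "Sw blk2 a = f2 + P * (a - f2)" using fix_form[OF f_fix(2)] rat_blk by simp
  ultimately have "0 < (1 - P) * (f2 - a)" by (simp add: algebra_simps)
  then show ?thesis using P_bounds by (simp add: zero_less_mult_iff)
qed

lemma f_neq: "f1 \<noteq> f2"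
proof
  assume "f1 = f2"
  then have "S i0 f2 = f2" using f1_eq by simp
  then have "(1 - lam i0) * (a - f2) = 0" using i0 by (simp add: S_eq algebra_simps)
  moreover have "1 - lam i0 \<noteq> 0" using lam01[OF i0(1)] by auto
  ultimately show False using f2_gt by simp
qed

end

context main
begin

definition "lo = min f1 f2"
definition "hi = max f1 f2"

lemma lohi: "lo < hi" "a \<le> lo" "hi \<le> b"
  using f_neq f_ab by (auto simp: lo_def hi_def)

definition Bf :: "bool \<Rightarrow> nat \<Rightarrow> nat" where "Bf \<beta> = (if \<beta> then C.W2 else C.Wf)"

lemma snormal_cc: "snormal n k (\<lambda>j. Bf (e (j div C.L)) (j mod C.L))"
  unfolding snormal_def
proof (intro exI allI impI)
  fix b :: "nat list" and m :: nat
  assume b: "length b = k \<and> set b \<subseteq> {0..n}"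
  have bW: "b \<in> C.Words" using b unfolding C.Words_def by auto
  have pre: "Bf \<beta> r = Bf \<beta>' r" if "r + 1 < k" for \<beta> \<beta>' r
    using C.Wf_start[OF that] C.W2_start[OF that] by (simp add: Bf_def)
  have cnt: "card {\<rho>. \<rho> < C.L \<and> map (\<lambda>i. Bf \<beta> ((\<rho> + i) mod C.L)) [0..<k] = b} = k" for \<beta>
  proof (cases \<beta>)
    case True
    have "map (\<lambda>i. Bf \<beta> ((\<rho> + i) mod C.L)) [0..<k] = C.cwin C.W2 \<rho>" for \<rho>
      unfolding C.cwin_def Bf_def using True by simp
    then show ?thesis using C.count_win2[OF bW] by simp
  next
    case False
    have "map (\<lambda>i. Bf \<beta> ((\<rho> + i) mod C.L)) [0..<k] = C.cwin C.Wf \<rho>" for \<rho>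
      unfolding C.cwin_def Bf_def using False by simp
    then show ?thesis using C.count_win[OF bW] by simp
  qed
  have occ: "occ_count (\<lambda>j. Bf (e (j div C.L)) (j mod C.L)) b (t * C.L) = k * t" for t
    by (rule block_occ[where K = k and L = C.L and C = k and Bf = Bf, OF C.k_lt_L pre cnt]) (use b in auto)
  have bb: "\<bar>real (occ_count (\<lambda>j. Bf (e (j div C.L)) (j mod C.L)) b m) - real k / real C.L * real m\<bar> \<le> real k"
    by (rule block_bound[OF C.L_pos occ])
  have "real k / real C.L * real m = real m / real (n + 1) ^ k"
  proof -
    have "real C.L = real k * real (n + 1) ^ k" unfolding C.L_def C.N_def by simp
    then show ?thesis using k1 by (simp add: field_simps)
  qed
  then show "\<bar>real (occ_count (\<lambda>j. Bf (e (j div C.L)) (j mod C.L)) b m) - real m / real (n + 1) ^ k\<bar> \<le> real k"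
    using bb by simp
qed

lemma blk_nth: "j mod C.L < C.L" "blk1 ! (j mod C.L) = C.Wf (j mod C.L)" "blk2 ! (j mod C.L) = C.W2 (j mod C.L)"
proof -
  show jl: "j mod C.L < C.L" using C.L_pos by simp
  show "blk1 ! (j mod C.L) = C.Wf (j mod C.L)" unfolding blk1_def using jl by simp
  show "blk2 ! (j mod C.L) = C.W2 (j mod C.L)" unfolding blk2_def using jl by simp
qed

lemma Ycode:
  assumes x: "lo \<le> x" "x \<le> hi"
  shows "\<exists>c. (\<forall>j. c j \<in> {0..n}) \<and> snormal n k c \<and> (\<lambda>j. comp_prefix S c j 0) \<longlonglongrightarrow> x"
proof -
  have bnds5: "min 0 a \<le> p i \<and> p i \<le> max 0 b" if "i \<le> n" for i
    using ab_bounds[OF that] by (simp add: min_le_iff_disj le_max_iff_disj)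
  have bnds: "min 0 a \<le> lo" "hi \<le> max 0 b" "min 0 a \<le> 0" "0 \<le> max 0 b"
    "\<And>i. i \<le> n \<Longrightarrow> min 0 a \<le> p i \<and> p i \<le> max 0 b"
    using lohi bnds5 by (auto simp: min_le_iff_disj le_max_iff_disj)
  have dig: "(\<lambda>j. Bf \<beta> (j mod C.L)) j \<in> {0..n}" for \<beta> j
    using C.Wf_lt[of "j mod C.L"] W2_lt[of "j mod C.L"] by (auto simp: Bf_def less_Suc_eq_le)
  show ?thesis
  proof (cases "f1 < f2")
    case True
    then have lh: "lo = f1" "hi = f2" by (auto simp: lo_def hi_def)
    obtain e where e: "(\<lambda>j. comp_prefix S (\<lambda>j. (if e (j div C.L) then blk2 else blk1) ! (j mod C.L)) j 0) \<longlonglongrightarrow> x"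
      using two_block_coding[OF blk_len(1,2) C.L_pos blk_sets(1,2), of f1 f2 P x "min 0 a" "max 0 b"]
        f_fix rat_blk P_bounds lohi x bnds lh by auto
    have ceq: "(\<lambda>j. (if e (j div C.L) then blk2 else blk1) ! (j mod C.L)) = (\<lambda>j. Bf (e (j div C.L)) (j mod C.L))"
      by (rule ext) (simp only: Bf_def blk_nth split: if_split, blast)
    show ?thesis
      by (rule exI[of _ "\<lambda>j. Bf (e (j div C.L)) (j mod C.L)"]) (use e ceq snormal_cc[of e] dig in auto)
  next
    case False
    then have lh: "lo = f2" "hi = f1" using f_neq by (auto simp: lo_def hi_def)
    obtain e where e: "(\<lambda>j. comp_prefix S (\<lambda>j. (if e (j div C.L) then blk1 else blk2) ! (j mod C.L)) j 0) \<longlonglongrightarrow> x"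
      using two_block_coding[OF blk_len(2,1) C.L_pos blk_sets(2,1), of f2 f1 P x "min 0 a" "max 0 b"]
        f_fix rat_blk P_bounds lohi x bnds lh by auto
    have ceq: "(\<lambda>j. (if e (j div C.L) then blk1 else blk2) ! (j mod C.L)) = (\<lambda>j. Bf (\<not> e (j div C.L)) (j mod C.L))"
      by (rule ext) (simp only: Bf_def blk_nth split: if_split, blast)
    show ?thesis
      by (rule exI[of _ "\<lambda>j. Bf (\<not> e (j div C.L)) (j mod C.L)"])
        (use e ceq snormal_cc[of "\<lambda>t. \<not> e t"] dig in auto)
  qed
qed

end

context main
begin

definition "G = (\<Union>u\<in>{u. set u \<subseteq> {0..n}}. Sw u ` {lo<..<hi})"

lemma Sw_fun: "Sw u = (\<lambda>x. rat u * x + Sw u 0)"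
  by (rule ext) (rule Sw_affine)

lemma G_open: "open G"
  unfolding G_def
proof (rule open_UN, rule ballI)
  fix u assume u: "u \<in> {u. set u \<subseteq> {0..n}}"
  have "Sw u ` {lo<..<hi} = {rat u * lo + Sw u 0<..<rat u * hi + Sw u 0}"
    by (subst Sw_fun) (rule aff_img_open[OF rat_pos], use u in auto)
  then show "open (Sw u ` {lo<..<hi})" by simp
qed

lemma G_mem: "set u \<subseteq> {0..n} \<Longrightarrow> lo < z \<Longrightarrow> z < hi \<Longrightarrow> Sw u z \<in> G"
  unfolding G_def by auto

lemma G_sub_Xk: "G \<subseteq> Xk_set n k (ifs_map lam p) X"
proof
  fix y assume "y \<in> G"
  then obtain u z where u: "set u \<subseteq> {0..n}" and z: "lo < z" "z < hi" and y: "y = Sw u z"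
    unfolding G_def by auto
  obtain c where c: "\<forall>j. c j \<in> {0..n}" "snormal n k c" "(\<lambda>j. comp_prefix S c j 0) \<longlonglongrightarrow> z"
    using Ycode[of z] z by auto
  have d: "\<forall>j. pshift u c j \<in> {0..n}"
  proof
    fix j show "pshift u c j \<in> {0..n}"
    proof (cases "j < length u")
      case True
      then have "u ! j \<in> set u" by (rule nth_mem)
      then have "u ! j \<in> {0..n}" using u by blast
      then show ?thesis using True by (simp add: pshift_def)
    next
      case False then show ?thesis using c(1) by (simp add: pshift_def)
    qed
  qed
  have nrm: "k_simply_normal n k (pshift u c)" by (rule snormal_imp[OF snormal_shift[OF c(2)]])
  have lim: "(\<lambda>j. comp_prefix S (pshift u c) j 0) \<longlonglongrightarrow> y" using pshift_coding[OF c(3)] y by simp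
  have yX: "y \<in> X"
  proof -
    have "a \<le> Sw u z" by (rule Sw_lower[OF u]) (use ab_bounds z lohi in auto)
    moreover have "Sw u z \<le> b" by (rule Sw_upper[OF u]) (use ab_bounds z lohi in auto)
    ultimately show ?thesis using X_eq y by simp
  qed
  show "y \<in> Xk_set n k (ifs_map lam p) X"
    unfolding Xk_set_def using yX d nrm lim by (auto simp: S_def)
qed

lemma G_sub: "G \<subseteq> {a..b}" using G_sub_Xk X_eq by (auto simp: Xk_set_def)

lemma G_dense: "X \<subseteq> closure G"
proof
  fix x assume "x \<in> X"
  then have x: "a \<le> x" "x \<le> b" using X_eq by auto
  let ?z = "(lo + hi) / 2"
  have z: "lo < ?z" "?z < hi" "a \<le> ?z" "?z \<le> b" using lohi by auto
  show "x \<in> closure G"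
  proof (rule closure_approachable[THEN iffD2], intro allI impI)
    fix r :: real assume "0 < r"
    then obtain u where u: "set u \<subseteq> {0..n}" "\<bar>Sw u ?z - x\<bar> < r"
      using approx_level[of x ?z r] x z by auto
    then show "\<exists>y\<in>G. dist y x < r" using G_mem[OF u(1) z(1,2)] by (auto simp: dist_real_def)
  qed
qed

definition "E = {a..b} - G"

lemma E_compact: "compact E"
proof -
  have "E = {a..b} \<inter> (- G)" by (auto simp: E_def)
  moreover have "closed (- G)" using G_open by (simp add: closed_Compl)
  ultimately show ?thesis by (simp add: compact_Int_closed)
qed

lemma E_lmeas: "E \<in> lmeasurable" by (rule lmeasurable_compact[OF E_compact])

lemma E_cyl: "set u \<subseteq> {0..n} \<Longrightarrow> E \<inter> Sw u ` {a..b} \<subseteq> Sw u ` E"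
proof
  fix x assume u: "set u \<subseteq> {0..n}" and x: "x \<in> E \<inter> Sw u ` {a..b}"
  then obtain y where y: "a \<le> y" "y \<le> b" "x = Sw u y" by auto
  have "y \<notin> G"
  proof
    assume "y \<in> G"
    then obtain v z where v: "set v \<subseteq> {0..n}" "lo < z" "z < hi" "y = Sw v z" unfolding G_def by auto
    then have "x = Sw (u @ v) z" using y by (simp add: Sw_append)
    moreover have "set (u @ v) \<subseteq> {0..n}" using u v by auto
    ultimately have "x \<in> G" using G_mem v by auto
    then show False using x by (auto simp: E_def)
  qed
  then show "x \<in> Sw u ` E" using y by (auto simp: E_def)
qed

lemma meas_img: "set u \<subseteq> {0..n} \<Longrightarrow> measure lebesgue (Sw u ` T) = rat u * measure lebesgue T"
proof -
  assume u: "set u \<subseteq> {0..n}"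
  have "Sw u ` T = (\<lambda>x. rat u *\<^sub>R x + Sw u 0) ` T" by (subst Sw_fun) simp
  then show ?thesis using measure_lebesgue_affine[of "rat u" "Sw u 0" T] rat_pos[OF u] by simp
qed

lemma cyl_eq: "set u \<subseteq> {0..n} \<Longrightarrow>
   Sw u ` {a..b} = cball (Sw u ((a + b) / 2)) (rat u * (b - a) / 2) \<and>
   measure lebesgue (Sw u ` {a..b}) = rat u * (b - a)"
proof -
  assume u: "set u \<subseteq> {0..n}"
  have r: "0 < rat u" using rat_pos[OF u] .
  have img: "Sw u ` {a..b} = {Sw u a..Sw u b}"
    by (subst (1 2 3) Sw_fun) (rule aff_img_closed[OF r])
  have "Sw u ((a + b) / 2) - rat u * (b - a) / 2 = Sw u a" "Sw u ((a + b) / 2) + rat u * (b - a) / 2 = Sw u b"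
    by (subst (1 2) Sw_fun, simp add: algebra_simps add_divide_distrib diff_divide_distrib)+
  then have "cball (Sw u ((a + b) / 2)) (rat u * (b - a) / 2) = {Sw u a..Sw u b}"
    by (simp add: cball_eq_atLeastAtMost)
  moreover have "measure lebesgue {Sw u a..Sw u b} = rat u * (b - a)"
  proof -
    have "Sw u b - Sw u a = rat u * (b - a)" by (rule Sw_diff)
    moreover have "Sw u a \<le> Sw u b"
    proof -
      have "0 \<le> rat u * (b - a)" using r a_lt_b by simp
      then show ?thesis using Sw_diff[of u b a] by linarith
    qed
    ultimately show ?thesis by simp
  qed
  ultimately show ?thesis using img by simp
qed

end

context main
begin

lemma E_negl: "negligible E"
proof -
  define \<rho> where "\<rho> = measure lebesgue E / (b - a)"
  have ba: "0 < b - a" using a_lt_b by simp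
  have \<rho>0: "0 \<le> \<rho>" using ba by (simp add: \<rho>_def)
  have Eab: "E \<subseteq> {a..b}" by (auto simp: E_def)
  have cylE: "measure lebesgue (E \<inter> Sw u ` {a..b}) \<le> \<rho> * measure lebesgue (Sw u ` {a..b})"
    if u: "set u \<subseteq> {0..n}" for u
  proof -
    have cont: "continuous_on E (Sw u)" by (subst Sw_fun) (intro continuous_intros)
    have cimg: "compact (Sw u ` E)" by (rule compact_continuous_image[OF cont E_compact])
    have cyl: "Sw u ` {a..b} = cball (Sw u ((a + b) / 2)) (rat u * (b - a) / 2)" using cyl_eq[OF u] by simp
    have "measure lebesgue (E \<inter> Sw u ` {a..b}) \<le> measure lebesgue (Sw u ` E)"
    proof (rule measure_mono_fmeasurable[OF E_cyl[OF u]])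
      show "E \<inter> Sw u ` {a..b} \<in> sets lebesgue" unfolding cyl
        using E_lmeas by (intro sets.Int) (auto intro: fmeasurableD)
      show "Sw u ` E \<in> fmeasurable lebesgue" by (rule lmeasurable_compact[OF cimg])
    qed
    also have "\<dots> = rat u * measure lebesgue E" by (rule meas_img[OF u])
    also have "\<dots> = \<rho> * measure lebesgue (Sw u ` {a..b})"
    proof -
      have m: "measure lebesgue (Sw u ` {a..b}) = rat u * (b - a)" using cyl_eq[OF u] by blast
      show ?thesis unfolding m \<rho>_def using ba by simp
    qed
    finally show ?thesis .
  qed
  define \<delta> where "\<delta> = (hi - lo) / 8"
  define l' where "l' = lo + (hi - lo) / 4"
  define h' where "h' = hi - (hi - lo) / 4"
  define Ob where "Ob = {a - \<delta><..<b + \<delta>} - {l'..h'}"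
  have hl: "0 < hi - lo" using lohi by simp
  have sub: "{l'..h'} \<subseteq> {a - \<delta><..<b + \<delta>}" using lohi hl by (auto simp: l'_def h'_def \<delta>_def field_simps)
  have Oopen: "open Ob" unfolding Ob_def by (intro open_Diff) auto
  have Omeas: "Ob \<in> lmeasurable" unfolding Ob_def by (intro fmeasurable_Diff) auto
  have mO: "measure lebesgue Ob < b - a"
  proof -
    have "measure lebesgue Ob = measure lebesgue {a - \<delta><..<b + \<delta>} - measure lebesgue {l'..h'}"
      unfolding Ob_def by (rule measurable_measure_Diff[OF _ _ sub]) auto
    also have "\<dots> = (b + \<delta> - (a - \<delta>)) - (h' - l')"
    proof -
      have dp: "0 < \<delta>" using hl by (simp add: \<delta>_def)
      have i1: "a - \<delta> \<le> b + \<delta>" using ba dp by linarith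
      have i2: "l' \<le> h'" using hl unfolding l'_def h'_def by (simp add: field_simps)
      have "measure lebesgue {a - \<delta><..<b + \<delta>} = b + \<delta> - (a - \<delta>)" using i1 by simp
      moreover have "measure lebesgue {l'..h'} = h' - l'" using i2 by simp
      ultimately show ?thesis by simp
    qed
    also have "\<dots> < b - a" using hl by (simp add: \<delta>_def l'_def h'_def field_simps)
    finally show ?thesis .
  qed
  have EO: "E \<subseteq> Ob"
  proof
    fix x assume x: "x \<in> E"
    then have xab: "a \<le> x" "x \<le> b" "x \<notin> G" by (auto simp: E_def)
    have "x \<notin> {l'..h'}"
    proof
      assume "x \<in> {l'..h'}"
      then have "lo < x" "x < hi" using hl by (auto simp: l'_def h'_def field_simps)
      then have "Sw [] x \<in> G" by (intro G_mem) auto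
      then show False using xab by simp
    qed
    moreover have "x \<in> {a - \<delta><..<b + \<delta>}" using xab hl by (auto simp: \<delta>_def field_simps)
    ultimately show "x \<in> Ob" by (simp add: Ob_def)
  qed
  define K where "K = {u. set u \<subseteq> {0..n} \<and> Sw u ` {a..b} \<subseteq> Ob}"
  define ctr where "ctr u = Sw u ((a + b) / 2)" for u
  define rad where "rad u = rat u * (b - a) / 2" for u
  have cb: "cball (ctr u) (rad u) = Sw u ` {a..b}" if "u \<in> K" for u
    using cyl_eq[of u] that by (simp add: K_def ctr_def rad_def)
  have r: "\<And>i. i \<in> K \<Longrightarrow> 0 < rad i" using rat_pos ba by (auto simp: K_def rad_def)
  have S: "\<exists>i. i \<in> K \<and> x \<in> cball (ctr i) (rad i) \<and> rad i < d" if x: "x \<in> E" and d: "0 < d" for x d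
  proof -
    have "x \<in> Ob" using x EO by auto
    then obtain \<epsilon> where \<epsilon>: "0 < \<epsilon>" "ball x \<epsilon> \<subseteq> Ob" using Oopen open_contains_ball by blast
    have xab: "a \<le> x" "x \<le> b" using x Eab by auto
    obtain u where u: "set u \<subseteq> {0..n}" "\<exists>y. a \<le> y \<and> y \<le> b \<and> x = Sw u y" "rat u * (b - a) < min \<epsilon> d"
      using approx_level[of x a "min \<epsilon> d"] xab a_lt_b \<epsilon> d by auto
    obtain y where y: "a \<le> y" "y \<le> b" "x = Sw u y" using u(2) by blast
    have rp: "0 < rat u" using rat_pos[OF u(1)] .
    have "Sw u ` {a..b} \<subseteq> ball x \<epsilon>"
    proof
      fix w assume "w \<in> Sw u ` {a..b}"
      then obtain y' where y': "a \<le> y'" "y' \<le> b" "w = Sw u y'" by auto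
      have "\<bar>w - x\<bar> = rat u * \<bar>y' - y\<bar>" using Sw_diff[of u y' y] y y' rp by (simp add: abs_mult)
      also have "\<dots> \<le> rat u * (b - a)" using y y' rp by (intro mult_left_mono) auto
      also have "\<dots> < \<epsilon>" using u(3) by simp
      finally show "w \<in> ball x \<epsilon>" by (simp add: dist_real_def abs_minus_commute)
    qed
    then have uK: "u \<in> K" using \<epsilon> u(1) by (auto simp: K_def)
    moreover have "x \<in> cball (ctr u) (rad u)" using cb[OF uK] y by auto
    moreover have "rad u < d"
    proof -
      have "rat u * (b - a) < d" using u(3) by simp
      then show ?thesis using d by (simp add: rad_def)
    qed
    ultimately show ?thesis by blast
  qed
  have "\<exists>C. countable C \<and> C \<subseteq> K \<and> pairwise (\<lambda>i j. disjnt (cball (ctr i) (rad i)) (cball (ctr j) (rad j))) C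
          \<and> negligible (E - (\<Union>i\<in>C. cball (ctr i) (rad i)))"
    by (rule Vitali_covering_theorem_cballs[of K rad E ctr, OF r S]) blast+
  then obtain C where C: "countable C" "C \<subseteq> K"
    and pw: "pairwise (\<lambda>i j. disjnt (cball (ctr i) (rad i)) (cball (ctr j) (rad j))) C"
    and neg: "negligible (E - (\<Union>i\<in>C. cball (ctr i) (rad i)))" by blast
  have Ecb: "E \<inter> cball (ctr u) (rad u) \<in> fmeasurable lebesgue" for u
    by (rule lmeasurable_compact) (use E_compact in \<open>simp add: compact_Int_closed\<close>)
  have bound: "measure lebesgue (\<Union>u\<in>I. E \<inter> cball (ctr u) (rad u)) \<le> \<rho> * measure lebesgue Ob"
    if I: "I \<subseteq> C" "finite I" for I
  proof -
    have IK: "\<And>u. u \<in> I \<Longrightarrow> u \<in> K" using I C by auto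
    have mle: "measure lebesgue (\<Union>u\<in>I. cball (ctr u) (rad u)) \<le> measure lebesgue Ob"
    proof (rule measure_mono_fmeasurable[OF _ _ Omeas])
      show "(\<Union>u\<in>I. cball (ctr u) (rad u)) \<subseteq> Ob" using IK cb by (auto simp: K_def)
      show "(\<Union>u\<in>I. cball (ctr u) (rad u)) \<in> sets lebesgue" using I(2) by (auto intro: fmeasurableD)
    qed
    have "measure lebesgue (\<Union>u\<in>I. E \<inter> cball (ctr u) (rad u)) \<le> (\<Sum>u\<in>I. measure lebesgue (E \<inter> cball (ctr u) (rad u)))"
      by (rule measure_UNION_le[OF I(2)]) (use Ecb in \<open>auto intro: fmeasurableD\<close>)
    also have "\<dots> \<le> (\<Sum>u\<in>I. \<rho> * measure lebesgue (cball (ctr u) (rad u)))"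
    proof (rule sum_mono)
      fix u assume "u \<in> I"
      then have uK: "u \<in> K" by (rule IK)
      then show "measure lebesgue (E \<inter> cball (ctr u) (rad u)) \<le> \<rho> * measure lebesgue (cball (ctr u) (rad u))"
        using cylE[of u] cb[OF uK] by (simp add: K_def)
    qed
    also have "\<dots> = \<rho> * (\<Sum>u\<in>I. measure lebesgue (cball (ctr u) (rad u)))" by (simp add: sum_distrib_left)
    also have "(\<Sum>u\<in>I. measure lebesgue (cball (ctr u) (rad u))) = measure lebesgue (\<Union>u\<in>I. cball (ctr u) (rad u))"
      by (rule measure_UNION'[symmetric, OF I(2)]) (use pw I(1) in \<open>auto elim: pairwise_subset\<close>)
    also have "\<rho> * measure lebesgue (\<Union>u\<in>I. cball (ctr u) (rad u)) \<le> \<rho> * measure lebesgue Ob"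
      by (rule mult_left_mono[OF mle \<rho>0])
    finally show ?thesis by simp
  qed
  have Um: "(\<Union>u\<in>C. E \<inter> cball (ctr u) (rad u)) \<in> fmeasurable lebesgue"
    by (rule fmeasurable_UN_bound[OF C(1) Ecb bound]) auto
  have Ub: "measure lebesgue (\<Union>u\<in>C. E \<inter> cball (ctr u) (rad u)) \<le> \<rho> * measure lebesgue Ob"
    by (rule measure_UN_bound[OF C(1) Ecb bound]) auto
  let ?N = "E - (\<Union>i\<in>C. cball (ctr i) (rad i))"
  have Nm: "?N \<in> fmeasurable lebesgue" using neg by (rule negligible_imp_measurable)
  have EsubNU: "E \<subseteq> ?N \<union> (\<Union>u\<in>C. E \<inter> cball (ctr u) (rad u))" by blast
  have "measure lebesgue E \<le> measure lebesgue (?N \<union> (\<Union>u\<in>C. E \<inter> cball (ctr u) (rad u)))"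
    by (rule measure_mono_fmeasurable[OF EsubNU]) (use E_lmeas Nm Um in \<open>auto intro: fmeasurableD fmeasurable.Un\<close>)
  also have "\<dots> \<le> measure lebesgue ?N + measure lebesgue (\<Union>u\<in>C. E \<inter> cball (ctr u) (rad u))"
    by (rule measure_Un_le) (use Nm Um in \<open>auto intro: fmeasurableD\<close>)
  also have "measure lebesgue ?N = 0" using neg by (rule negligible_imp_measure0)
  finally have mE: "measure lebesgue E \<le> \<rho> * measure lebesgue Ob" using Ub by simp
  have "measure lebesgue E = 0"
  proof (rule ccontr)
    assume "measure lebesgue E \<noteq> 0"
    then have pos: "0 < measure lebesgue E" using measure_nonneg[of lebesgue E] by linarith
    then have "0 < \<rho>" using ba by (simp add: \<rho>_def)
    then have "\<rho> * measure lebesgue Ob < \<rho> * (b - a)" using mO by simp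
    also have "\<dots> = measure lebesgue E" using ba by (simp add: \<rho>_def)
    finally show False using mE by simp
  qed
  then show ?thesis using negligible_iff_measure0[OF E_lmeas] by simp
qed

end

theorem theorem3p3:
  fixes n k :: nat and p lam :: "nat \<Rightarrow> real" and X :: "real set"
  assumes "\<exists>i\<in>{0..n}. \<exists>j\<in>{0..n}. p i \<noteq> p j"
    and "k \<ge> 1"
    and "\<forall>i\<in>{0..n}. 0 < lam i \<and> lam i < 1"
    and "(\<Prod>i\<in>{0..n}. lam i ^ (k * (n + 1) ^ (k - 1))) \<ge> 1 / 2"
    and "X \<noteq> {}" and "compact X"
    and "X = (\<Union>i\<in>{0..n}. ifs_map lam p i ` X)"
  shows "(\<exists>U. openin (top_of_set X) U \<and> X \<subseteq> closure U \<and> U \<subseteq> Xk_set n k (ifs_map lam p) X)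
         \<and> (AE x in lebesgue. x \<in> X \<longrightarrow> x \<in> Xk_set n k (ifs_map lam p) X)"
proof -
  interpret M: main n p lam k X
    by unfold_locales (use assms in auto)
  have 1: "\<exists>U. openin (top_of_set X) U \<and> X \<subseteq> closure U \<and> U \<subseteq> Xk_set n k (ifs_map lam p) X"
  proof (intro exI conjI)
    show "openin (top_of_set X) M.G" unfolding openin_open
      by (intro exI[of _ M.G]) (use M.G_open M.G_sub M.X_eq in auto)
    show "X \<subseteq> closure M.G" by (rule M.G_dense)
    show "M.G \<subseteq> Xk_set n k (ifs_map lam p) X" by (rule M.G_sub_Xk)
  qed
  have 2: "AE x in lebesgue. x \<in> X \<longrightarrow> x \<in> Xk_set n k (ifs_map lam p) X"
  proof (rule AE_I')
    show "M.E \<in> null_sets lebesgue" using M.E_negl negligible_iff_null_sets by blast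
    show "{x \<in> space lebesgue. \<not> (x \<in> X \<longrightarrow> x \<in> Xk_set n k (ifs_map lam p) X)} \<subseteq> M.E"
      using M.G_sub_Xk M.X_eq by (auto simp: M.E_def)
  qed
  show ?thesis using 1 2 by blast
qed

end
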